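(* Let $\varphi\in\mathcal L$ be falsifiable (on some bi-relational model) and let $\Sigma$ be the set of subformulas of $\varphi$. Then $\varphi$ is falsified (i.e. $\varphi\notin\ell(w)$ for some world $w$) in some ultimately periodic $\Sigma$-quasimodel of height at most $|\Sigma|+1$.
   Context: $\mathcal L$: formulas with $\wedge,\vee,\Rightarrow,\Leftarrow,\mathsf X,\mathsf Y,\mathsf G,\mathsf H,\mathsf U,\mathsf S$. Bi-relational model: $(W,T,\le,S,[\![\cdot]\!])$ with $(W,\le)$ linear, $S$ a bijection on $T$, $[\![p]\!]$ downward closed in the first coordinate, Kripke clauses ($\Rightarrow$ looks at all $v\le w$, $\Leftarrow$ at some $v\ge w$ with $\varphi$ true and $\psi$ false) and linear-time clauses along $S$; falsifiable means $[\![\varphi]\!]\ne W\times T$ in some model. For subformula-closed $\Sigma$: a $\Sigma$-type is $\Phi\subseteq\Sigma$ with Boolean closure for $\wedge,\vee$, ($\varphi\Rightarrow\psi\in\Phi$ implies $\varphi\notin\Phi$ or $\psi\in\Phi$; $\psi\in\Phi$ implies $\varphi\Rightarrow\psi\in\Phi$), ($\varphi\Leftarrow\psi\in\Phi$ implies $\varphi\in\Phi$; $\varphi\in\Phi,\psi\notin\Phi$ imply $\varphi\Leftarrow\psi\in\Phi$). A $\Sigma$-labelled space is $(W,\le,\ell)$, $(W,\le)$ a disjoint union of linear posets (its linear components), $\ell$ into $\Sigma$-types, $w\le v\Rightarrow\ell(w)\supseteq\ell(v)$, with $\Rightarrow$-formulas outside $\ell(w)$ witnessed at some $v\le w$ and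 $\Leftarrow$-formulas in $\ell(w)$ witnessed at some $v\ge w$. A relation $R$ is convex (images/preimages of points convex), fully confluent (forth–down: $x\le x'Ry'\Rightarrow\exists y\,xRy\le y'$; forth–up: $x'\ge xRy\Rightarrow\exists y'\,x'Ry'\ge y$; back–down: $x'Ry'\ge y\Rightarrow\exists x\,x'\ge xRy$; back–up: $xRy\le y'\Rightarrow\exists x'\,x\le x'Ry'$), bi-serial, and sensible (for each $wRv$ and formulas in $\Sigma$: $\mathsf X\varphi\in\ell(w)\iff\varphi\in\ell(v)$; $\mathsf Y\varphi\in\ell(v)\iff\varphi\in\ell(w)$; $\mathsf G\varphi\in\ell(w)\iff\varphi\in\ell(w)\wedge\mathsf G\varphi\in\ell(v)$; $\mathsf H\varphi\in\ell(v)\iff\varphi\in\ell(v)\wedge\mathsf H\varphi\in\ell(w)$; $\varphi\,\mathsf U\,\psi\in\ell(w)\iff\psi\in\ell(w)\vee(\varphi\in\ell(w)\wedge\varphi\,\mathsf U\,\psi\in\ell(v))$; $\varphi\,\mathsf S\,\psi\in\ell(v)\iff\psi\in\ell(v)\vee(\varphi\in\ell(v)\wedge\varphi\,\mathsf S\,\psi\in\ell(w))$), and $\omega$-sensible ($\mathsf G\varphi\in\Sigma\setminus\ell(w)$ gives $v$ with $wR^nv$, $\varphi\notin\ell(v)$; $\mathsf H\varphi\in\Sigma\setminus\ell(w)$ gives $v$ with $vR^nw$, $\varphi\notin\ell(v)$; $\varphi\,\mathsf U\,\psi\in\ell(w)$ gives $v$ with $wR^nv$, $\psi\in\ell(v)$;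 $\varphi\,\mathsf S\,\psi\in\ell(w)$ gives $v$ with $vR^nw$, $\psi\in\ell(v)$; $n\ge0$). A $\Sigma$-quasimodel is a $\Sigma$-labelled space with a bi-serial, fully confluent, convex, sensible, $\omega$-sensible relation. Height: supremum of $n$ with a chain $w_1<\dots<w_n$. An ultimately periodic $\Sigma$-quasimodel is a $\Sigma$-quasimodel $(W,\le,\ell,R)$ for which there exist integers $i,i'\ge0$, $l,l'\ge1$ and a map $\pi\colon W\to T:=\{-(i'+l'-1),\dots,i+l-1\}$ such that each fibre $\pi^{-1}(t)$ is exactly one linear component of $W$, and $wRv$ implies $\pi(w)R_T\pi(v)$, where $R_T$ consists of the pairs $(k,k+1)$ for $-(i'+l'-1)\le k\le i+l-2$ together with $(i+l-1,i)$ and $(-i',-(i'+l'-1))$ (a "double lasso": a middle segment through $0$ with a loop at each end). *)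

theory Defs
  imports Main
begin

datatype 'a fm =
    Atom 'a
  | And "'a fm" "'a fm"
  | Or "'a fm" "'a fm"
  | Imp "'a fm" "'a fm"
  | Coimp "'a fm" "'a fm"
  | Next "'a fm"
  | Prev "'a fm"
  | Always "'a fm"
  | Hist "'a fm"
  | Until "'a fm" "'a fm"
  | Since "'a fm" "'a fm"

fun subf :: "'a fm \<Rightarrow> 'a fm set" where
  "subf (Atom p) = {Atom p}"
| "subf (And a b) = insert (And a b) (subf a \<union> subf b)"
| "subf (Or a b) = insert (Or a b) (subf a \<union> subf b)"
| "subf (Imp a b) = insert (Imp a b) (subf a \<union> subf b)"
| "subf (Coimp a b) = insert (Coimp a b) (subf a \<union> subf b)"
| "subf (Next a) = insert (Next a) (subf a)"
| "subf (Prev a) = insert (Prev a) (subf a)"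
| "subf (Always a) = insert (Always a) (subf a)"
| "subf (Hist a) = insert (Hist a) (subf a)"
| "subf (Until a b) = insert (Until a b) (subf a \<union> subf b)"
| "subf (Since a b) = insert (Since a b) (subf a \<union> subf b)"

record ('a, 'w, 't) bimodel =
  wor :: "'w set"
  mle :: "'w \<Rightarrow> 'w \<Rightarrow> bool"
  tim :: "'t set"
  suc :: "'t \<Rightarrow> 't"
  val :: "'a \<Rightarrow> ('w \<times> 't) set"

definition is_bimodel :: "('a, 'w, 't) bimodel \<Rightarrow> bool" where
  "is_bimodel M \<longleftrightarrow>
     (\<forall>w\<in>wor M. mle M w w) \<and>
     (\<forall>w\<in>wor M. \<forall>v\<in>wor M. mle M w v \<and> mle M v w \<longrightarrow> w = v) \<and>
     (\<forall>u\<in>wor M. \<forall>w\<in>wor M. \<forall>v\<in>wor M. mle M u w \<and> mle M w v \<longrightarrow> mle M u v) \<and>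
     (\<forall>w\<in>wor M. \<forall>v\<in>wor M. mle M w v \<or> mle M v w) \<and>
     bij_betw (suc M) (tim M) (tim M) \<and>
     (\<forall>p. val M p \<subseteq> wor M \<times> tim M \<and>
          (\<forall>w v t. (w, t) \<in> val M p \<longrightarrow> v \<in> wor M \<longrightarrow> mle M v w \<longrightarrow> (v, t) \<in> val M p))"

abbreviation pre :: "('a, 'w, 't) bimodel \<Rightarrow> 't \<Rightarrow> 't" where
  "pre M \<equiv> inv_into (tim M) (suc M)"

fun sat :: "('a, 'w, 't) bimodel \<Rightarrow> 'w \<Rightarrow> 't \<Rightarrow> 'a fm \<Rightarrow> bool" where
  "sat M w t (Atom p) = ((w, t) \<in> val M p)"
| "sat M w t (And a b) = (sat M w t a \<and> sat M w t b)"
| "sat M w t (Or a b) = (sat M w t a \<or> sat M w t b)"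
| "sat M w t (Imp a b) = (\<forall>v\<in>wor M. mle M v w \<longrightarrow> sat M v t a \<longrightarrow> sat M v t b)"
| "sat M w t (Coimp a b) = (\<exists>v\<in>wor M. mle M w v \<and> sat M v t a \<and> \<not> sat M v t b)"
| "sat M w t (Next a) = sat M w (suc M t) a"
| "sat M w t (Prev a) = sat M w (pre M t) a"
| "sat M w t (Always a) = (\<forall>n. sat M w ((suc M ^^ n) t) a)"
| "sat M w t (Hist a) = (\<forall>n. sat M w ((pre M ^^ n) t) a)"
| "sat M w t (Until a b) =
     (\<exists>n. sat M w ((suc M ^^ n) t) b \<and> (\<forall>k<n. sat M w ((suc M ^^ k) t) a))"
| "sat M w t (Since a b) =
     (\<exists>n. sat M w ((pre M ^^ n) t) b \<and> (\<forall>k<n. sat M w ((pre M ^^ k) t) a))"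

definition falsifiable_in :: "('a, 'w, 't) bimodel \<Rightarrow> 'a fm \<Rightarrow> bool" where
  "falsifiable_in M \<phi> \<longleftrightarrow> is_bimodel M \<and> (\<exists>w\<in>wor M. \<exists>t\<in>tim M. \<not> sat M w t \<phi>)"

definition is_type :: "'a fm set \<Rightarrow> 'a fm set \<Rightarrow> bool" where
  "is_type \<Sigma> \<Phi> \<longleftrightarrow> \<Phi> \<subseteq> \<Sigma> \<and>
     (\<forall>a b. And a b \<in> \<Sigma> \<longrightarrow> (And a b \<in> \<Phi> \<longleftrightarrow> a \<in> \<Phi> \<and> b \<in> \<Phi>)) \<and>
     (\<forall>a b. Or a b \<in> \<Sigma> \<longrightarrow> (Or a b \<in> \<Phi> \<longleftrightarrow> a \<in> \<Phi> \<or> b \<in> \<Phi>)) \<and>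
     (\<forall>a b. Imp a b \<in> \<Phi> \<longrightarrow> a \<notin> \<Phi> \<or> b \<in> \<Phi>) \<and>
     (\<forall>a b. Imp a b \<in> \<Sigma> \<longrightarrow> b \<in> \<Phi> \<longrightarrow> Imp a b \<in> \<Phi>) \<and>
     (\<forall>a b. Coimp a b \<in> \<Phi> \<longrightarrow> a \<in> \<Phi>) \<and>
     (\<forall>a b. Coimp a b \<in> \<Sigma> \<longrightarrow> a \<in> \<Phi> \<longrightarrow> b \<notin> \<Phi> \<longrightarrow> Coimp a b \<in> \<Phi>)"

definition lt_in :: "(nat \<times> nat) set \<Rightarrow> nat \<Rightarrow> nat \<Rightarrow> bool" where
  "lt_in le x y \<longleftrightarrow> (x, y) \<in> le \<and> x \<noteq> y"

definition component :: "nat set \<Rightarrow> (nat \<times> nat) set \<Rightarrow> nat \<Rightarrow> nat set" where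
  "component W le w = {v \<in> W. (w, v) \<in> le \<or> (v, w) \<in> le}"

definition disjoint_union_of_linear :: "nat set \<Rightarrow> (nat \<times> nat) set \<Rightarrow> bool" where
  "disjoint_union_of_linear W le \<longleftrightarrow>
     le \<subseteq> W \<times> W \<and>
     (\<forall>w\<in>W. (w, w) \<in> le) \<and>
     (\<forall>w\<in>W. \<forall>v\<in>W. (w, v) \<in> le \<and> (v, w) \<in> le \<longrightarrow> w = v) \<and>
     (\<forall>u\<in>W. \<forall>w\<in>W. \<forall>v\<in>W. (u, w) \<in> le \<and> (w, v) \<in> le \<longrightarrow> (u, v) \<in> le) \<and>
     (\<forall>u\<in>W. \<forall>w\<in>W. \<forall>v\<in>W. v \<in> component W le w \<and> u \<in> component W le w
          \<longrightarrow> u \<in> component W le v)"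

definition labelled_space ::
  "'a fm set \<Rightarrow> nat set \<Rightarrow> (nat \<times> nat) set \<Rightarrow> (nat \<Rightarrow> 'a fm set) \<Rightarrow> bool" where
  "labelled_space \<Sigma> W le lab \<longleftrightarrow>
     disjoint_union_of_linear W le \<and>
     (\<forall>w\<in>W. is_type \<Sigma> (lab w)) \<and>
     (\<forall>w v. (w, v) \<in> le \<longrightarrow> lab v \<subseteq> lab w) \<and>
     (\<forall>w\<in>W. \<forall>a b. Imp a b \<in> \<Sigma> \<longrightarrow> Imp a b \<notin> lab w \<longrightarrow>
        (\<exists>v\<in>W. (v, w) \<in> le \<and> a \<in> lab v \<and> b \<notin> lab v)) \<and>
     (\<forall>w\<in>W. \<forall>a b. Coimp a b \<in> lab w \<longrightarrow>
        (\<exists>v\<in>W. (w, v) \<in> le \<and> a \<in> lab v \<and> b \<notin> lab v))"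

definition convex_set :: "(nat \<times> nat) set \<Rightarrow> nat set \<Rightarrow> bool" where
  "convex_set le A \<longleftrightarrow> (\<forall>x\<in>A. \<forall>y\<in>A. \<forall>z. (x, z) \<in> le \<and> (z, y) \<in> le \<longrightarrow> z \<in> A)"

definition convex_rel :: "(nat \<times> nat) set \<Rightarrow> (nat \<times> nat) set \<Rightarrow> bool" where
  "convex_rel le R \<longleftrightarrow> (\<forall>x. convex_set le (R `` {x}) \<and> convex_set le (R\<inverse> `` {x}))"

definition fully_confluent :: "(nat \<times> nat) set \<Rightarrow> (nat \<times> nat) set \<Rightarrow> bool" where
  "fully_confluent le R \<longleftrightarrow>
     (\<forall>x x' y'. (x, x') \<in> le \<and> (x', y') \<in> R \<longrightarrow> (\<exists>y. (x, y) \<in> R \<and> (y, y') \<in> le)) \<and>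
     (\<forall>x x' y. (x, x') \<in> le \<and> (x, y) \<in> R \<longrightarrow> (\<exists>y'. (x', y') \<in> R \<and> (y, y') \<in> le)) \<and>
     (\<forall>x' y' y. (x', y') \<in> R \<and> (y, y') \<in> le \<longrightarrow> (\<exists>x. (x, x') \<in> le \<and> (x, y) \<in> R)) \<and>
     (\<forall>x y y'. (x, y) \<in> R \<and> (y, y') \<in> le \<longrightarrow> (\<exists>x'. (x, x') \<in> le \<and> (x', y') \<in> R))"

definition bi_serial :: "nat set \<Rightarrow> (nat \<times> nat) set \<Rightarrow> bool" where
  "bi_serial W R \<longleftrightarrow> (\<forall>w\<in>W. (\<exists>v. (w, v) \<in> R) \<and> (\<exists>v. (v, w) \<in> R))"

definition sensible :: "'a fm set \<Rightarrow> (nat \<Rightarrow> 'a fm set) \<Rightarrow> (nat \<times> nat) set \<Rightarrow> bool" where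
  "sensible \<Sigma> lab R \<longleftrightarrow> (\<forall>w v. (w, v) \<in> R \<longrightarrow>
     (\<forall>a. Next a \<in> \<Sigma> \<longrightarrow> (Next a \<in> lab w \<longleftrightarrow> a \<in> lab v)) \<and>
     (\<forall>a. Prev a \<in> \<Sigma> \<longrightarrow> (Prev a \<in> lab v \<longleftrightarrow> a \<in> lab w)) \<and>
     (\<forall>a. Always a \<in> \<Sigma> \<longrightarrow> (Always a \<in> lab w \<longleftrightarrow> a \<in> lab w \<and> Always a \<in> lab v)) \<and>
     (\<forall>a. Hist a \<in> \<Sigma> \<longrightarrow> (Hist a \<in> lab v \<longleftrightarrow> a \<in> lab v \<and> Hist a \<in> lab w)) \<and>
     (\<forall>a b. Until a b \<in> \<Sigma> \<longrightarrow>
        (Until a b \<in> lab w \<longleftrightarrow> b \<in> lab w \<or> (a \<in> lab w \<and> Until a b \<in> lab v))) \<and>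
     (\<forall>a b. Since a b \<in> \<Sigma> \<longrightarrow>
        (Since a b \<in> lab v \<longleftrightarrow> b \<in> lab v \<or> (a \<in> lab v \<and> Since a b \<in> lab w))))"

definition omega_sensible ::
  "'a fm set \<Rightarrow> nat set \<Rightarrow> (nat \<Rightarrow> 'a fm set) \<Rightarrow> (nat \<times> nat) set \<Rightarrow> bool" where
  "omega_sensible \<Sigma> W lab R \<longleftrightarrow> (\<forall>w\<in>W.
     (\<forall>a. Always a \<in> \<Sigma> \<longrightarrow> Always a \<notin> lab w \<longrightarrow>
        (\<exists>n v. (w, v) \<in> R ^^ n \<and> a \<notin> lab v)) \<and>
     (\<forall>a. Hist a \<in> \<Sigma> \<longrightarrow> Hist a \<notin> lab w \<longrightarrow>
        (\<exists>n v. (v, w) \<in> R ^^ n \<and> a \<notin> lab v)) \<and>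
     (\<forall>a b. Until a b \<in> lab w \<longrightarrow> (\<exists>n v. (w, v) \<in> R ^^ n \<and> b \<in> lab v)) \<and>
     (\<forall>a b. Since a b \<in> lab w \<longrightarrow> (\<exists>n v. (v, w) \<in> R ^^ n \<and> b \<in> lab v)))"

definition quasimodel ::
  "'a fm set \<Rightarrow> nat set \<Rightarrow> (nat \<times> nat) set \<Rightarrow> (nat \<Rightarrow> 'a fm set) \<Rightarrow> (nat \<times> nat) set \<Rightarrow> bool" where
  "quasimodel \<Sigma> W le lab R \<longleftrightarrow>
     labelled_space \<Sigma> W le lab \<and> R \<subseteq> W \<times> W \<and>
     bi_serial W R \<and> fully_confluent le R \<and> convex_rel le R \<and>
     sensible \<Sigma> lab R \<and> omega_sensible \<Sigma> W lab R"

definition height_le :: "nat set \<Rightarrow> (nat \<times> nat) set \<Rightarrow> nat \<Rightarrow> bool" where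
  "height_le W le k \<longleftrightarrow>
     (\<forall>xs. set xs \<subseteq> W \<and> sorted_wrt (lt_in le) xs \<longrightarrow> length xs \<le> k)"

definition lasso_rel :: "nat \<Rightarrow> nat \<Rightarrow> nat \<Rightarrow> nat \<Rightarrow> (int \<times> int) set" where
  "lasso_rel i i' l l' =
     {(k, k + 1) | k. - (int i' + int l' - 1) \<le> k \<and> k \<le> int i + int l - 2}
     \<union> {(int i + int l - 1, int i), (- int i', - (int i' + int l' - 1))}"

definition ultimately_periodic ::
  "'a fm set \<Rightarrow> nat set \<Rightarrow> (nat \<times> nat) set \<Rightarrow> (nat \<Rightarrow> 'a fm set) \<Rightarrow> (nat \<times> nat) set \<Rightarrow> bool" where
  "ultimately_periodic \<Sigma> W le lab R \<longleftrightarrow>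
     quasimodel \<Sigma> W le lab R \<and>
     (\<exists>(i::nat) (i'::nat) (l::nat) (l'::nat) (\<pi>::nat \<Rightarrow> int).
        l \<ge> 1 \<and> l' \<ge> 1 \<and>
        (\<forall>w\<in>W. \<pi> w \<in> {- (int i' + int l' - 1) .. int i + int l - 1}) \<and>
        (\<forall>t\<in>{- (int i' + int l' - 1) .. int i + int l - 1}. \<exists>w\<in>W. \<pi> w = t) \<and>
        (\<forall>w\<in>W. {v \<in> W. \<pi> v = \<pi> w} = component W le w) \<and>
        (\<forall>w v. (w, v) \<in> R \<longrightarrow> (\<pi> w, \<pi> v) \<in> lasso_rel i i' l l'))"

end

theory Submission
  imports Defs
begin


lemma subf_refl: "\<psi> \<in> subf \<psi>" by (cases \<psi>) auto
lemma subf_trans: "\<psi> \<in> subf \<phi> \<Longrightarrow> subf \<psi> \<subseteq> subf \<phi>"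
  by (induction \<phi>) auto
lemma finite_subf: "finite (subf \<phi>)" by (induction \<phi>) auto
lemma subf_sub: "\<psi> \<in> subf \<phi> \<Longrightarrow> \<chi> \<in> subf \<psi> \<Longrightarrow> \<chi> \<in> subf \<phi>"
  using subf_trans by blast

lemma all_funpow_unfold: "(\<forall>n. P ((f^^n) t)) \<longleftrightarrow> P t \<and> (\<forall>n. P ((f^^n) (f t)))"
proof
  assume h: "\<forall>n. P ((f^^n) t)"
  show "P t \<and> (\<forall>n. P ((f^^n) (f t)))"
  proof
    show "P t" using h[rule_format, of 0] by simp
    show "\<forall>n. P ((f^^n) (f t))"
    proof
      fix n show "P ((f^^n) (f t))" using h[rule_format, of "Suc n"] by (simp add: funpow_swap1)
    qed
  qed
next
  assume h: "P t \<and> (\<forall>n. P ((f^^n) (f t)))"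
  show "\<forall>n. P ((f^^n) t)"
  proof
    fix n show "P ((f^^n) t)" using h by (cases n) (auto simp: funpow_swap1)
  qed
qed

lemma ex_until_unfold:
  "(\<exists>n. B ((f^^n) t) \<and> (\<forall>k<n. A ((f^^k) t))) \<longleftrightarrow>
   B t \<or> (A t \<and> (\<exists>n. B ((f^^n) (f t)) \<and> (\<forall>k<n. A ((f^^k) (f t)))))"
proof
  assume "\<exists>n. B ((f^^n) t) \<and> (\<forall>k<n. A ((f^^k) t))"
  then obtain n where n: "B ((f^^n) t)" "\<forall>k<n. A ((f^^k) t)" by blast
  show "B t \<or> (A t \<and> (\<exists>n. B ((f^^n) (f t)) \<and> (\<forall>k<n. A ((f^^k) (f t)))))"
  proof (cases n)
    case 0 then show ?thesis using n by simp
  next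
    case (Suc m)
    have "A t" using n(2)[rule_format, of 0] Suc by simp
    moreover have "B ((f^^m) (f t))" using n(1) Suc by (simp add: funpow_swap1)
    moreover have "\<forall>k<m. A ((f^^k) (f t))"
    proof (intro allI impI)
      fix k assume "k < m"
      then show "A ((f^^k) (f t))" using n(2)[rule_format, of "Suc k"] Suc by (simp add: funpow_swap1)
    qed
    ultimately show ?thesis by blast
  qed
next
  assume h: "B t \<or> (A t \<and> (\<exists>n. B ((f^^n) (f t)) \<and> (\<forall>k<n. A ((f^^k) (f t)))))"
  show "\<exists>n. B ((f^^n) t) \<and> (\<forall>k<n. A ((f^^k) t))"
  proof (cases "B t")
    case True then show ?thesis by (intro exI[of _ 0]) simp
  next
    case False
    then obtain n where n: "A t" "B ((f^^n) (f t))" "\<forall>k<n. A ((f^^k) (f t))" using h by blast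
    have "B ((f^^Suc n) t)" using n(2) by (simp add: funpow_swap1)
    moreover have "\<forall>k<Suc n. A ((f^^k) t)"
    proof (intro allI impI)
      fix k assume "k < Suc n"
      then show "A ((f^^k) t)" using n by (cases k) (auto simp: funpow_swap1)
    qed
    ultimately show ?thesis by blast
  qed
qed

lemma funpow_in: "(\<And>x. x \<in> S \<Longrightarrow> f x \<in> S) \<Longrightarrow> x \<in> S \<Longrightarrow> (f^^n) x \<in> S"
  by (induction n) auto

locale qbase =
  fixes M :: "('a, 'w, 't) bimodel" and \<phi> :: "'a fm" and w0 :: 'w and t0 :: 't
  assumes bm: "is_bimodel M" and w0: "w0 \<in> wor M" and t0: "t0 \<in> tim M"
    and fals: "\<not> sat M w0 t0 \<phi>"
begin

lemma mrefl: "w \<in> wor M \<Longrightarrow> mle M w w" using bm unfolding is_bimodel_def by blast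
lemma mtrans: "u \<in> wor M \<Longrightarrow> w \<in> wor M \<Longrightarrow> v \<in> wor M \<Longrightarrow> mle M u w \<Longrightarrow> mle M w v \<Longrightarrow> mle M u v"
  using bm unfolding is_bimodel_def by blast
lemma mlin: "w \<in> wor M \<Longrightarrow> v \<in> wor M \<Longrightarrow> mle M w v \<or> mle M v w"
  using bm unfolding is_bimodel_def by blast
lemma matom: "(w, t) \<in> val M p \<Longrightarrow> v \<in> wor M \<Longrightarrow> mle M v w \<Longrightarrow> (v, t) \<in> val M p"
  using bm unfolding is_bimodel_def by blast
lemma mbij: "bij_betw (suc M) (tim M) (tim M)"
  using bm unfolding is_bimodel_def by blast

lemma suc_in: "t \<in> tim M \<Longrightarrow> suc M t \<in> tim M"
  using mbij bij_betwE by blast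
lemma pre_in: "t \<in> tim M \<Longrightarrow> pre M t \<in> tim M"
  using mbij by (metis bij_betw_def inv_into_into)
lemma suc_pre: "t \<in> tim M \<Longrightarrow> suc M (pre M t) = t"
  using mbij by (metis bij_betw_def f_inv_into_f)
lemma pre_suc: "t \<in> tim M \<Longrightarrow> pre M (suc M t) = t"
  using mbij by (metis bij_betw_def inv_into_f_f)

lemma persist: "v \<in> wor M \<Longrightarrow> w \<in> wor M \<Longrightarrow> mle M v w \<Longrightarrow> sat M w s \<psi> \<Longrightarrow> sat M v s \<psi>"
proof (induction \<psi> arbitrary: v w s)
  case (Atom p) then show ?case using matom by auto
next
  case (Imp a b)
  show ?case unfolding sat.simps
  proof (intro ballI impI)
    fix u assume "u \<in> wor M" "mle M u v" "sat M u s a"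
    then show "sat M u s b" using Imp.prems mtrans[of u v w] by auto
  qed
next
  case (Coimp a b)
  then obtain u where "u \<in> wor M" "mle M w u" "sat M u s a" "\<not> sat M u s b" by auto
  then show ?case using Coimp.prems mtrans[of v w u] by auto
next
  case (Until a b) then show ?case by simp blast
next
  case (Since a b) then show ?case by simp blast
qed auto

definition tau :: "int \<Rightarrow> 't" where
  "tau t = (if 0 \<le> t then (suc M ^^ nat t) t0 else (pre M ^^ nat (-t)) t0)"

lemma tau_in: "tau t \<in> tim M"
  unfolding tau_def using funpow_in[OF suc_in] funpow_in[OF pre_in] t0 by auto

lemma tau0: "tau 0 = t0" by (simp add: tau_def)

lemma tau_suc: "suc M (tau t) = tau (t+1)"
proof (cases "0 \<le> t")
  case True
  then have "nat (t+1) = Suc (nat t)" by simp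
  then show ?thesis using True by (simp add: tau_def)
next
  case False
  then obtain n where n: "-t = int (Suc n)" using False by (metis add_0 int_ops(4) less_imp_Suc_add neg_0_less_iff_less not_le pos_int_cases)
  then have "nat (-t) = Suc n" by simp
  then have "tau t = pre M ((pre M ^^ n) t0)" using False by (simp add: tau_def)
  then have "suc M (tau t) = (pre M ^^ n) t0" using suc_pre funpow_in[OF pre_in] t0 by simp
  also have "\<dots> = tau (t+1)"
  proof (cases n)
    case 0 then show ?thesis using n by (simp add: tau_def)
  next
    case (Suc m) then have "t + 1 < 0" "nat (-(t+1)) = n" using n by auto
    then show ?thesis by (simp add: tau_def)
  qed
  finally show ?thesis .
qed

lemma tau_pre: "pre M (tau t) = tau (t - 1)"
  using tau_suc[of "t-1"] pre_suc[OF tau_in[of "t-1"]] by simp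

lemma tau_sucn: "(suc M ^^ n) (tau t) = tau (t + int n)"
  by (induction n) (auto simp: tau_suc algebra_simps)

lemma tau_pren: "(pre M ^^ n) (tau t) = tau (t - int n)"
  by (induction n) (auto simp: tau_pre algebra_simps)

end



lemma cl_And: "And a b \<in> subf \<phi> \<Longrightarrow> a \<in> subf \<phi> \<and> b \<in> subf \<phi>"
  using subf_trans subf_refl by fastforce
lemma cl_Or: "Or a b \<in> subf \<phi> \<Longrightarrow> a \<in> subf \<phi> \<and> b \<in> subf \<phi>"
  using subf_trans subf_refl by fastforce
lemma cl_Imp: "Imp a b \<in> subf \<phi> \<Longrightarrow> a \<in> subf \<phi> \<and> b \<in> subf \<phi>"
  using subf_trans subf_refl by fastforce
lemma cl_Coimp: "Coimp a b \<in> subf \<phi> \<Longrightarrow> a \<in> subf \<phi> \<and> b \<in> subf \<phi>"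
  using subf_trans subf_refl by fastforce
lemma cl_Until: "Until a b \<in> subf \<phi> \<Longrightarrow> a \<in> subf \<phi> \<and> b \<in> subf \<phi>"
  using subf_trans subf_refl by fastforce
lemma cl_Since: "Since a b \<in> subf \<phi> \<Longrightarrow> a \<in> subf \<phi> \<and> b \<in> subf \<phi>"
  using subf_trans subf_refl by fastforce
lemma cl_Next: "Next a \<in> subf \<phi> \<Longrightarrow> a \<in> subf \<phi>"
  using subf_trans subf_refl by fastforce
lemma cl_Prev: "Prev a \<in> subf \<phi> \<Longrightarrow> a \<in> subf \<phi>"
  using subf_trans subf_refl by fastforce
lemma cl_Always: "Always a \<in> subf \<phi> \<Longrightarrow> a \<in> subf \<phi>"
  using subf_trans subf_refl by fastforce
lemma cl_Hist: "Hist a \<in> subf \<phi> \<Longrightarrow> a \<in> subf \<phi>"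
  using subf_trans subf_refl by fastforce

fun pendF :: "'a fm \<Rightarrow> 'a fm set \<Rightarrow> bool" where
  "pendF (Always a) L = (Always a \<notin> L)"
| "pendF (Until a b) L = (Until a b \<in> L)"
| "pendF _ L = False"
fun fulF :: "'a fm \<Rightarrow> 'a fm set \<Rightarrow> bool" where
  "fulF (Always a) L = (a \<notin> L)"
| "fulF (Until a b) L = (b \<in> L)"
| "fulF _ L = False"
fun pendB :: "'a fm \<Rightarrow> 'a fm set \<Rightarrow> bool" where
  "pendB (Hist a) L = (Hist a \<notin> L)"
| "pendB (Since a b) L = (Since a b \<in> L)"
| "pendB _ L = False"
fun fulB :: "'a fm \<Rightarrow> 'a fm set \<Rightarrow> bool" where
  "fulB (Hist a) L = (a \<notin> L)"
| "fulB (Since a b) L = (b \<in> L)"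
| "fulB _ L = False"

context qbase
begin

lemma sat_Always_unf: "sat M w t (Always a) = (sat M w t a \<and> sat M w (suc M t) (Always a))"
  unfolding sat.simps by (rule all_funpow_unfold)
lemma sat_Hist_unf: "sat M w t (Hist a) = (sat M w t a \<and> sat M w (pre M t) (Hist a))"
  unfolding sat.simps by (rule all_funpow_unfold)
lemma sat_Until_unf: "sat M w t (Until a b) = (sat M w t b \<or> (sat M w t a \<and> sat M w (suc M t) (Until a b)))"
  unfolding sat.simps by (rule ex_until_unfold)
lemma sat_Since_unf: "sat M w t (Since a b) = (sat M w t b \<or> (sat M w t a \<and> sat M w (pre M t) (Since a b)))"
  unfolding sat.simps by (rule ex_until_unfold)

definition lab :: "'w \<Rightarrow> int \<Rightarrow> 'a fm set" where
  "lab w t = {\<psi> \<in> subf \<phi>. sat M w (tau t) \<psi>}"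
definition slice :: "int \<Rightarrow> 'a fm set set" where
  "slice t = (\<lambda>w. lab w t) ` wor M"

lemma lab_sub: "lab w t \<subseteq> subf \<phi>" by (auto simp: lab_def)
lemma slice_sub: "L \<in> slice t \<Longrightarrow> L \<subseteq> subf \<phi>" using lab_sub by (auto simp: slice_def)
lemma lab_mono: "v \<in> wor M \<Longrightarrow> w \<in> wor M \<Longrightarrow> mle M v w \<Longrightarrow> lab w t \<subseteq> lab v t"
  using persist by (auto simp: lab_def)
lemma lab_lin: "v \<in> wor M \<Longrightarrow> w \<in> wor M \<Longrightarrow> lab w t \<subseteq> lab v t \<or> lab v t \<subseteq> lab w t"
  using lab_mono mlin by blast
lemma slice_lin: "L \<in> slice t \<Longrightarrow> L' \<in> slice t \<Longrightarrow> L \<subseteq> L' \<or> L' \<subseteq> L"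
  using lab_lin by (auto simp: slice_def)
lemma slice_ne: "slice t \<noteq> {}" using w0 by (auto simp: slice_def)
lemma lab_in_slice: "w \<in> wor M \<Longrightarrow> lab w t \<in> slice t" by (auto simp: slice_def)

lemma lab_type: "w \<in> wor M \<Longrightarrow> is_type (subf \<phi>) (lab w t)"
  unfolding is_type_def
proof (intro conjI allI impI)
  assume w: "w \<in> wor M"
  show "lab w t \<subseteq> subf \<phi>" by (rule lab_sub)
  fix a b
  show "And a b \<in> subf \<phi> \<Longrightarrow> (And a b \<in> lab w t) = (a \<in> lab w t \<and> b \<in> lab w t)"
    using cl_And by (auto simp: lab_def)
  show "Or a b \<in> subf \<phi> \<Longrightarrow> (Or a b \<in> lab w t) = (a \<in> lab w t \<or> b \<in> lab w t)"
    using cl_Or by (auto simp: lab_def)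
  show "Imp a b \<in> lab w t \<Longrightarrow> a \<notin> lab w t \<or> b \<in> lab w t"
  proof -
    assume h: "Imp a b \<in> lab w t"
    then have "a \<in> subf \<phi> \<and> b \<in> subf \<phi>" using cl_Imp by (auto simp: lab_def)
    moreover have "sat M w (tau t) a \<longrightarrow> sat M w (tau t) b" using h w mrefl[OF w] by (simp add: lab_def)
    ultimately show ?thesis by (simp add: lab_def)
  qed
  show "Imp a b \<in> subf \<phi> \<Longrightarrow> b \<in> lab w t \<Longrightarrow> Imp a b \<in> lab w t"
  proof -
    assume h: "Imp a b \<in> subf \<phi>" "b \<in> lab w t"
    have "\<forall>v\<in>wor M. mle M v w \<longrightarrow> sat M v (tau t) a \<longrightarrow> sat M v (tau t) b"
      using h(2) w persist[of _ w "tau t" b] by (simp add: lab_def)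
    then show ?thesis using h(1) by (simp add: lab_def)
  qed
  show "Coimp a b \<in> lab w t \<Longrightarrow> a \<in> lab w t"
  proof -
    assume h: "Coimp a b \<in> lab w t"
    then have "a \<in> subf \<phi>" using cl_Coimp by (auto simp: lab_def)
    moreover obtain v where "v \<in> wor M" "mle M w v" "sat M v (tau t) a" using h by (auto simp: lab_def)
    then have "sat M w (tau t) a" using persist[of w v "tau t" a] w by blast
    ultimately show ?thesis by (simp add: lab_def)
  qed
  show "Coimp a b \<in> subf \<phi> \<Longrightarrow> a \<in> lab w t \<Longrightarrow> b \<notin> lab w t \<Longrightarrow> Coimp a b \<in> lab w t"
  proof -
    assume h: "Coimp a b \<in> subf \<phi>" "a \<in> lab w t" "b \<notin> lab w t"
    then have "b \<in> subf \<phi>" using cl_Coimp by blast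
    then have "sat M w (tau t) a" "\<not> sat M w (tau t) b" using h by (auto simp: lab_def)
    then show ?thesis using h(1) w mrefl[OF w] by (auto simp: lab_def)
  qed
qed

lemma lab_Next: "Next a \<in> subf \<phi> \<Longrightarrow> (Next a \<in> lab w s \<longleftrightarrow> a \<in> lab w (s+1))"
  using cl_Next by (auto simp: lab_def tau_suc)
lemma lab_Prev: "Prev a \<in> subf \<phi> \<Longrightarrow> (Prev a \<in> lab w (s+1) \<longleftrightarrow> a \<in> lab w s)"
  using cl_Prev by (auto simp: lab_def tau_pre)
lemma lab_Always: "Always a \<in> subf \<phi> \<Longrightarrow>
   (Always a \<in> lab w s \<longleftrightarrow> a \<in> lab w s \<and> Always a \<in> lab w (s+1))"
  using cl_Always[of a] sat_Always_unf[of w "tau s" a] by (auto simp: lab_def tau_suc)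
lemma lab_Until: "Until a b \<in> subf \<phi> \<Longrightarrow>
   (Until a b \<in> lab w s \<longleftrightarrow> b \<in> lab w s \<or> (a \<in> lab w s \<and> Until a b \<in> lab w (s+1)))"
  using cl_Until[of a b] sat_Until_unf[of w "tau s" a b] by (auto simp: lab_def tau_suc)
lemma lab_Hist: "Hist a \<in> subf \<phi> \<Longrightarrow>
   (Hist a \<in> lab w s \<longleftrightarrow> a \<in> lab w s \<and> Hist a \<in> lab w (s-1))"
  using cl_Hist[of a] sat_Hist_unf[of w "tau s" a] by (auto simp: lab_def tau_pre)
lemma lab_Since: "Since a b \<in> subf \<phi> \<Longrightarrow>
   (Since a b \<in> lab w s \<longleftrightarrow> b \<in> lab w s \<or> (a \<in> lab w s \<and> Since a b \<in> lab w (s-1)))"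
  using cl_Since[of a b] sat_Since_unf[of w "tau s" a b] by (auto simp: lab_def tau_pre)

lemma stepF: "e \<in> subf \<phi> \<Longrightarrow> pendF e (lab w s) \<Longrightarrow> fulF e (lab w s) \<or> pendF e (lab w (s+1))"
proof (cases e)
  case (Always a) assume "e \<in> subf \<phi>" "pendF e (lab w s)"
  then show ?thesis using Always lab_Always[of a w s] by auto
next
  case (Until a b) assume "e \<in> subf \<phi>" "pendF e (lab w s)"
  then show ?thesis using Until lab_Until[of a b w s] by auto
qed auto
lemma stepB: "e \<in> subf \<phi> \<Longrightarrow> pendB e (lab w s) \<Longrightarrow> fulB e (lab w s) \<or> pendB e (lab w (s-1))"
proof (cases e)
  case (Hist a) assume "e \<in> subf \<phi>" "pendB e (lab w s)"
  then show ?thesis using Hist lab_Hist[of a w s] by auto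
next
  case (Since a b) assume "e \<in> subf \<phi>" "pendB e (lab w s)"
  then show ?thesis using Since lab_Since[of a b w s] by auto
qed auto

lemma evF: "e \<in> subf \<phi> \<Longrightarrow> pendF e (lab w s) \<Longrightarrow> \<exists>n::nat. fulF e (lab w (s + int n))"
proof (cases e)
  case (Always a)
  assume "e \<in> subf \<phi>" "pendF e (lab w s)"
  then have "\<not> sat M w (tau s) (Always a)" "a \<in> subf \<phi>" using Always cl_Always by (auto simp: lab_def)
  then show ?thesis using Always by (auto simp: lab_def tau_sucn)
next
  case (Until a b)
  assume "e \<in> subf \<phi>" "pendF e (lab w s)"
  then have "sat M w (tau s) (Until a b)" "b \<in> subf \<phi>" using Until cl_Until by (auto simp: lab_def)
  then show ?thesis using Until by (auto simp: lab_def tau_sucn)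
qed auto

lemma evB: "e \<in> subf \<phi> \<Longrightarrow> pendB e (lab w s) \<Longrightarrow> \<exists>n::nat. fulB e (lab w (s - int n))"
proof (cases e)
  case (Hist a)
  assume "e \<in> subf \<phi>" "pendB e (lab w s)"
  then have "\<not> sat M w (tau s) (Hist a)" "a \<in> subf \<phi>" using Hist cl_Hist by (auto simp: lab_def)
  then show ?thesis using Hist by (auto simp: lab_def tau_pren)
next
  case (Since a b)
  assume "e \<in> subf \<phi>" "pendB e (lab w s)"
  then have "sat M w (tau s) (Since a b)" "b \<in> subf \<phi>" using Since cl_Since by (auto simp: lab_def)
  then show ?thesis using Since by (auto simp: lab_def tau_pren)
qed auto

lemma iterF: "e \<in> subf \<phi> \<Longrightarrow> pendF e (lab w s) \<Longrightarrow>
   (\<exists>j\<le>J. fulF e (lab w (s + int j))) \<or> pendF e (lab w (s + int J))"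
proof (induction J)
  case 0 then show ?case by simp
next
  case (Suc J)
  show ?case
  proof (cases "\<exists>j\<le>J. fulF e (lab w (s + int j))")
    case True then show ?thesis using le_SucI by blast
  next
    case False
    then have "pendF e (lab w (s + int J))" using Suc by blast
    then have "fulF e (lab w (s + int J)) \<or> pendF e (lab w (s + int J + 1))" using stepF Suc.prems by blast
    then show ?thesis
    proof
      assume "fulF e (lab w (s + int J))" then show ?thesis by (intro disjI1 exI[of _ J]) simp
    next
      assume "pendF e (lab w (s + int J + 1))"
      moreover have "s + int J + 1 = s + int (Suc J)" by simp
      ultimately show ?thesis by metis
    qed
  qed
qed

lemma iterB: "e \<in> subf \<phi> \<Longrightarrow> pendB e (lab w s) \<Longrightarrow>
   (\<exists>j\<le>J. fulB e (lab w (s - int j))) \<or> pendB e (lab w (s - int J))"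
proof (induction J)
  case 0 then show ?case by simp
next
  case (Suc J)
  show ?case
  proof (cases "\<exists>j\<le>J. fulB e (lab w (s - int j))")
    case True then show ?thesis using le_SucI by blast
  next
    case False
    then have "pendB e (lab w (s - int J))" using Suc by blast
    then have "fulB e (lab w (s - int J)) \<or> pendB e (lab w (s - int J - 1))" using stepB Suc.prems by blast
    then show ?thesis
    proof
      assume "fulB e (lab w (s - int J))" then show ?thesis by (intro disjI1 exI[of _ J]) simp
    next
      assume "pendB e (lab w (s - int J - 1))"
      moreover have "s - int J - 1 = s - int (Suc J)" by simp
      ultimately show ?thesis by metis
    qed
  qed
qed

end



context qbase
begin

lemma WC: "w \<in> wor M \<Longrightarrow> u \<in> wor M \<Longrightarrow> lab w t \<subseteq> lab u t \<Longrightarrow>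
   \<exists>u'\<in>wor M. lab u' t = lab u t \<and> mle M u' w"
proof -
  assume h: "w \<in> wor M" "u \<in> wor M" "lab w t \<subseteq> lab u t"
  show ?thesis
  proof (cases "mle M u w")
    case True then show ?thesis using h by blast
  next
    case False
    then have "mle M w u" using mlin h by blast
    then have "lab u t \<subseteq> lab w t" using lab_mono h by blast
    then show ?thesis using h mrefl by (intro bexI[of _ w]) auto
  qed
qed

lemma WC': "w \<in> wor M \<Longrightarrow> u \<in> wor M \<Longrightarrow> lab u t \<subseteq> lab w t \<Longrightarrow>
   \<exists>u'\<in>wor M. lab u' t = lab u t \<and> mle M w u'"
proof -
  assume h: "w \<in> wor M" "u \<in> wor M" "lab u t \<subseteq> lab w t"
  show ?thesis
  proof (cases "mle M w u")
    case True then show ?thesis using h by blast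
  next
    case False
    then have "mle M u w" using mlin h by blast
    then have "lab w t \<subseteq> lab u t" using lab_mono h by blast
    then show ?thesis using h mrefl by (intro bexI[of _ w]) auto
  qed
qed

lemma CV: "u1 \<in> wor M \<Longrightarrow> u2 \<in> wor M \<Longrightarrow> v \<in> wor M \<Longrightarrow> lab u1 s = P \<Longrightarrow> lab u2 s = P \<Longrightarrow>
   lab u2 t \<subseteq> lab v t \<Longrightarrow> lab v t \<subseteq> lab u1 t \<Longrightarrow> \<exists>w\<in>wor M. lab w s = P \<and> lab w t = lab v t"
proof -
  assume h: "u1 \<in> wor M" "u2 \<in> wor M" "v \<in> wor M" "lab u1 s = P" "lab u2 s = P"
    "lab u2 t \<subseteq> lab v t" "lab v t \<subseteq> lab u1 t"
  show ?thesis
  proof (cases "mle M v u1")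
    case True
    then have "lab u1 t \<subseteq> lab v t" using lab_mono h by blast
    then show ?thesis using h by (intro bexI[of _ u1]) auto
  next
    case False
    then have vu1: "mle M u1 v" using mlin h by blast
    show ?thesis
    proof (cases "mle M u2 v")
      case True
      then have "lab v t \<subseteq> lab u2 t" using lab_mono h by blast
      then show ?thesis using h by (intro bexI[of _ u2]) auto
    next
      case False
      then have "mle M v u2" using mlin h by blast
      then have "lab u2 s \<subseteq> lab v s" "lab v s \<subseteq> lab u1 s" using lab_mono h vu1 by blast+
      then show ?thesis using h by (intro bexI[of _ v]) auto
    qed
  qed
qed

end

locale qm = qbase +
  fixes A B C E :: int and W :: "nat set" and tm :: "nat \<Rightarrow> int" and lb :: "nat \<Rightarrow> 'a fm set"
  assumes ord1: "C < E" and ord2: "E \<le> 0" and ord3: "0 \<le> A" and ord4: "A \<le> B"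
    and sliceA: "slice (B+1) = slice A" and sliceE: "slice C = slice E"
    and ancF: "\<forall>L\<in>slice A. \<exists>u\<in>wor M. lab u A = L \<and> (\<forall>e\<in>subf \<phi>. pendF e L \<longrightarrow>
                 (\<exists>d::nat. A + int d \<le> B \<and> fulF e (lab u (A + int d))))"
    and ancB: "\<forall>L\<in>slice E. \<exists>u\<in>wor M. lab u E = L \<and> (\<forall>e\<in>subf \<phi>. pendB e L \<longrightarrow>
                 (\<exists>d::nat. C \<le> E - int d \<and> fulB e (lab u (E - int d))))"
    and I1: "x \<in> W \<Longrightarrow> C \<le> tm x \<and> tm x \<le> B \<and> lb x \<in> slice (tm x)"
    and I2: "x \<in> W \<Longrightarrow> y \<in> W \<Longrightarrow> tm x = tm y \<Longrightarrow> lb x = lb y \<Longrightarrow> x = y"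
    and I3: "C \<le> t \<Longrightarrow> t \<le> B \<Longrightarrow> L \<in> slice t \<Longrightarrow> \<exists>x\<in>W. tm x = t \<and> lb x = L"
begin

definition Ed :: "(int \<times> int) set" where
  "Ed = {(t, t+1) | t. C \<le> t \<and> t < B} \<union> {(B, A), (E - 1, C)}"
definition leq :: "(nat \<times> nat) set" where
  "leq = {(x, y). x \<in> W \<and> y \<in> W \<and> tm x = tm y \<and> lb y \<subseteq> lb x}"
definition Rq :: "(nat \<times> nat) set" where
  "Rq = {(x, y). x \<in> W \<and> y \<in> W \<and> (tm x, tm y) \<in> Ed \<and>
          (\<exists>w\<in>wor M. lab w (tm x) = lb x \<and> lab w (tm x + 1) = lb y)}"

lemma Ed_props: "(s, t) \<in> Ed \<Longrightarrow> C \<le> s \<and> s \<le> B \<and> C \<le> t \<and> t \<le> B \<and> slice (s+1) = slice t"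
proof -
  assume "(s, t) \<in> Ed"
  then consider "C \<le> s" "s < B" "t = s + 1" | "s = B" "t = A" | "s = E - 1" "t = C"
    unfolding Ed_def by blast
  then show ?thesis
  proof cases
    case 1 then show ?thesis by simp
  next
    case 2 then show ?thesis using ord1 ord2 ord3 ord4 sliceA by simp
  next
    case 3 then show ?thesis using ord1 ord2 ord3 ord4 sliceE by simp
  qed
qed

lemma world_of: "x \<in> W \<Longrightarrow> \<exists>w\<in>wor M. lab w (tm x) = lb x"
proof -
  assume "x \<in> W"
  then have "lb x \<in> slice (tm x)" using I1 by blast
  then show ?thesis by (auto simp: slice_def)
qed

lemma node: "C \<le> t \<Longrightarrow> t \<le> B \<Longrightarrow> w \<in> wor M \<Longrightarrow> \<exists>x\<in>W. tm x = t \<and> lb x = lab w t"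
  using I3 lab_in_slice by blast

lemma mkR: "x \<in> W \<Longrightarrow> y \<in> W \<Longrightarrow> (tm x, tm y) \<in> Ed \<Longrightarrow> w \<in> wor M \<Longrightarrow> lab w (tm x) = lb x \<Longrightarrow>
   lab w (tm x + 1) = lb y \<Longrightarrow> (x, y) \<in> Rq"
  unfolding Rq_def by blast

lemma RD: "(x, y) \<in> Rq \<Longrightarrow> x \<in> W \<and> y \<in> W \<and> (tm x, tm y) \<in> Ed \<and>
   (\<exists>w\<in>wor M. lab w (tm x) = lb x \<and> lab w (tm x + 1) = lb y)"
  unfolding Rq_def by blast

lemma comp: "x \<in> W \<Longrightarrow> component W leq x = {v\<in>W. tm v = tm x}"
proof -
  assume x: "x \<in> W"
  have "\<And>v. v \<in> W \<Longrightarrow> tm v = tm x \<Longrightarrow> lb x \<subseteq> lb v \<or> lb v \<subseteq> lb x"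
    using I1 x slice_lin by metis
  then show ?thesis unfolding component_def leq_def using x by auto
qed

lemma fwd_path: "x \<in> W \<Longrightarrow> w \<in> wor M \<Longrightarrow> lab w (tm x) = lb x \<Longrightarrow> tm x + int n \<le> B \<Longrightarrow>
   \<exists>y\<in>W. (x, y) \<in> Rq ^^ n \<and> tm y = tm x + int n \<and> lb y = lab w (tm x + int n)"
proof (induction n)
  case 0 then show ?case by auto
next
  case (Suc n)
  then obtain y where y: "y \<in> W" "(x, y) \<in> Rq ^^ n" "tm y = tm x + int n" "lb y = lab w (tm x + int n)"
    by auto
  have C: "C \<le> tm x" using I1 Suc.prems by blast
  obtain y' where y': "y' \<in> W" "tm y' = tm x + int n + 1" "lb y' = lab w (tm x + int n + 1)"
    using node[of "tm x + int n + 1" w] C Suc.prems by auto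
  have "tm x + int n < B" using Suc.prems(4) by simp
  then have "(tm y, tm y') \<in> Ed" using y(3) y'(2) C unfolding Ed_def by force
  then have "(y, y') \<in> Rq" using mkR[of y y' w] y y' Suc.prems(2) by (simp add: add.assoc)
  then have "(x, y') \<in> Rq ^^ Suc n" using y relpow_Suc_I by metis
  moreover have eq: "tm x + int (Suc n) = tm x + int n + 1" by simp
  ultimately show ?case using y' unfolding eq by blast
qed

lemma bwd_path: "x \<in> W \<Longrightarrow> w \<in> wor M \<Longrightarrow> lab w (tm x) = lb x \<Longrightarrow> C \<le> tm x - int n \<Longrightarrow>
   \<exists>y\<in>W. (y, x) \<in> Rq ^^ n \<and> tm y = tm x - int n \<and> lb y = lab w (tm x - int n)"
proof (induction n)
  case 0 then show ?case by auto
next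
  case (Suc n)
  then obtain y where y: "y \<in> W" "(y, x) \<in> Rq ^^ n" "tm y = tm x - int n" "lb y = lab w (tm x - int n)"
    by auto
  have B: "tm x \<le> B" using I1 Suc.prems by blast
  obtain y' where y': "y' \<in> W" "tm y' = tm x - int n - 1" "lb y' = lab w (tm x - int n - 1)"
    using node[of "tm x - int n - 1" w] B Suc.prems by auto
  have "C \<le> tm x - int n - 1" using Suc.prems(4) by simp
  moreover have "tm x - int n - 1 < B" using B by simp
  ultimately have "(tm y', tm y) \<in> Ed" using y(3) y'(2) unfolding Ed_def by force
  moreover have "lab w (tm y' + 1) = lb y" using y y' by simp
  ultimately have "(y', y) \<in> Rq" using mkR[of y' y w] y y' Suc.prems(2) by simp
  then have "(y', x) \<in> Rq ^^ Suc n" using y relpow_Suc_I2 by metis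
  moreover have eq: "tm x - int (Suc n) = tm x - int n - 1" by simp
  ultimately show ?case using y' unfolding eq by blast
qed

end



context qm
begin

lemma omegaF:
  assumes e: "e \<in> subf \<phi>" and x: "x \<in> W" and p: "pendF e (lb x)"
  shows "\<exists>n v. (x, v) \<in> Rq ^^ n \<and> fulF e (lb v)"
proof -
  obtain w where w: "w \<in> wor M" "lab w (tm x) = lb x" using world_of x by blast
  have xr: "C \<le> tm x" "tm x \<le> B" using I1 x by auto
  define J where "J = nat (B - tm x)"
  have J: "tm x + int J = B" using xr by (simp add: J_def)
  have "(\<exists>j\<le>J. fulF e (lab w (tm x + int j))) \<or> pendF e (lab w (tm x + int J))"
    using iterF[OF e, of w "tm x" J] p w by simp
  then consider (a) j where "j \<le> J" "fulF e (lab w (tm x + int j))" | (b) "pendF e (lab w B)"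
    using J by auto
  then show ?thesis
  proof cases
    case a
    have "tm x + int j \<le> B" using a(1) J by linarith
    then obtain y where "y \<in> W" "(x, y) \<in> Rq ^^ j" "lb y = lab w (tm x + int j)"
      using fwd_path[OF x w(1) w(2), of j] by blast
    then show ?thesis using a(2) by metis
  next
    case b
    obtain yB where yB: "yB \<in> W" "(x, yB) \<in> Rq ^^ J" "tm yB = B" "lb yB = lab w B"
      using fwd_path[OF x w(1) w(2), of J] J by auto
    from stepF[OF e b] show ?thesis
    proof
      assume "fulF e (lab w B)" then show ?thesis using yB(2,4) by metis
    next
      assume pe: "pendF e (lab w (B + 1))"
      have "lab w (B+1) \<in> slice A" using sliceA lab_in_slice[OF w(1)] by metis
      then obtain u where u: "u \<in> wor M" "lab u A = lab w (B+1)"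
        and ud: "\<forall>e\<in>subf \<phi>. pendF e (lab w (B+1)) \<longrightarrow>
                 (\<exists>d::nat. A + int d \<le> B \<and> fulF e (lab u (A + int d)))"
        using ancF by metis
      obtain d where d: "A + int d \<le> B" "fulF e (lab u (A + int d))" using ud e pe by blast
      have CA: "C \<le> A" using ord1 ord2 ord3 by simp
      obtain z where z: "z \<in> W" "tm z = A" "lb z = lab w (B+1)"
        using I3[OF CA ord4 \<open>lab w (B+1) \<in> slice A\<close>] by blast
      have "(tm yB, tm z) \<in> Ed" using yB z by (simp add: Ed_def)
      then have "(yB, z) \<in> Rq" using mkR[of yB z w] yB z w by simp
      then have xz: "(x, z) \<in> Rq ^^ Suc J" using yB relpow_Suc_I by metis
      obtain v where v: "v \<in> W" "(z, v) \<in> Rq ^^ d" "lb v = lab u (A + int d)"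
        using fwd_path[OF z(1) u(1), of d] z u d by auto
      have "(x, v) \<in> Rq ^^ (Suc J + d)" using relpow_trans[OF xz v(2)] .
      then show ?thesis using v d by metis
    qed
  qed
qed

lemma omegaB:
  assumes e: "e \<in> subf \<phi>" and x: "x \<in> W" and p: "pendB e (lb x)"
  shows "\<exists>n v. (v, x) \<in> Rq ^^ n \<and> fulB e (lb v)"
proof -
  obtain w where w: "w \<in> wor M" "lab w (tm x) = lb x" using world_of x by blast
  have xr: "C \<le> tm x" "tm x \<le> B" using I1 x by auto
  define J where "J = nat (tm x - C)"
  have J: "tm x - int J = C" using xr by (simp add: J_def)
  have "(\<exists>j\<le>J. fulB e (lab w (tm x - int j))) \<or> pendB e (lab w (tm x - int J))"
    using iterB[OF e, of w "tm x" J] p w by simp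
  then consider (a) j where "j \<le> J" "fulB e (lab w (tm x - int j))" | (b) "pendB e (lab w C)"
    using J by auto
  then show ?thesis
  proof cases
    case a
    have "C \<le> tm x - int j" using a(1) J by linarith
    then obtain y where "y \<in> W" "(y, x) \<in> Rq ^^ j" "lb y = lab w (tm x - int j)"
      using bwd_path[OF x w(1) w(2), of j] by blast
    then show ?thesis using a(2) by metis
  next
    case b
    obtain yC where yC: "yC \<in> W" "(yC, x) \<in> Rq ^^ J" "tm yC = C" "lb yC = lab w C"
      using bwd_path[OF x w(1) w(2), of J] J by auto
    have "lab w C \<in> slice E" using sliceE lab_in_slice[OF w(1)] by metis
    then obtain u where u: "u \<in> wor M" "lab u E = lab w C"
      and ud: "\<forall>e\<in>subf \<phi>. pendB e (lab w C) \<longrightarrow>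
                 (\<exists>d::nat. C \<le> E - int d \<and> fulB e (lab u (E - int d)))"
      using ancB by metis
    obtain d where d: "C \<le> E - int d" "fulB e (lab u (E - int d))" using ud e b by blast
    show ?thesis
    proof (cases d)
      case 0
      then show ?thesis using d yC u by (intro exI[of _ J] exI[of _ yC]) simp
    next
      case (Suc d')
      have r: "C \<le> E - int d" "E - int d \<le> B" using d ord2 ord3 ord4 by auto
      obtain z where z: "z \<in> W" "tm z = E - int d" "lb z = lab u (E - int d)"
        using node[OF r u(1)] by blast
      have "tm z + int d' \<le> B" using z Suc ord2 ord3 ord4 by simp
      then obtain z' where z': "z' \<in> W" "(z, z') \<in> Rq ^^ d'" "tm z' = tm z + int d'"
          "lb z' = lab u (tm z + int d')"
        using fwd_path[OF z(1) u(1), of d'] z by auto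
      have tz': "tm z' = E - 1" using z' z Suc by simp
      have "(tm z', tm yC) \<in> Ed" using tz' yC by (simp add: Ed_def)
      moreover have "lab u (tm z') = lb z'" using z' tz' z Suc by simp
      moreover have "lab u (tm z' + 1) = lb yC" using tz' u yC by simp
      ultimately have "(z', yC) \<in> Rq" using mkR[of z' yC u] z' yC u by simp
      then have "(z, yC) \<in> Rq ^^ Suc d'" using z' relpow_Suc_I by metis
      then have "(z, x) \<in> Rq ^^ (Suc d' + J)" using relpow_trans yC(2) by metis
      then show ?thesis using z d by metis
    qed
  qed
qed

end



lemma chain_len: "sorted_wrt (\<lambda>a b. f b < (f a :: nat)) xs \<Longrightarrow> (\<forall>x\<in>set xs. f x \<le> N) \<Longrightarrow> length xs \<le> Suc N"
proof (induction xs arbitrary: N)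
  case Nil then show ?case by simp
next
  case (Cons x xs)
  show ?case
  proof (cases xs)
    case Nil then show ?thesis by simp
  next
    case (Cons y ys)
    have lt: "\<forall>z\<in>set xs. f z < f x" using Cons.prems(1) by simp
    then have "0 < f x" using Cons by auto
    have "\<forall>z\<in>set xs. f z \<le> f x - 1" using lt by fastforce
    then have "length xs \<le> Suc (f x - 1)" using Cons.IH Cons.prems(1) by simp
    moreover have "f x \<le> N" using Cons.prems(2) by simp
    ultimately show ?thesis using \<open>0 < f x\<close> by simp
  qed
qed

context qbase
begin
lemma sens_lab: "
     (\<forall>a. Next a \<in> subf \<phi> \<longrightarrow> (Next a \<in> lab w s \<longleftrightarrow> a \<in> lab w (s+1))) \<and>
     (\<forall>a. Prev a \<in> subf \<phi> \<longrightarrow> (Prev a \<in> lab w (s+1) \<longleftrightarrow> a \<in> lab w s)) \<and>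
     (\<forall>a. Always a \<in> subf \<phi> \<longrightarrow> (Always a \<in> lab w s \<longleftrightarrow> a \<in> lab w s \<and> Always a \<in> lab w (s+1))) \<and>
     (\<forall>a. Hist a \<in> subf \<phi> \<longrightarrow> (Hist a \<in> lab w (s+1) \<longleftrightarrow> a \<in> lab w (s+1) \<and> Hist a \<in> lab w s)) \<and>
     (\<forall>a b. Until a b \<in> subf \<phi> \<longrightarrow>
        (Until a b \<in> lab w s \<longleftrightarrow> b \<in> lab w s \<or> (a \<in> lab w s \<and> Until a b \<in> lab w (s+1)))) \<and>
     (\<forall>a b. Since a b \<in> subf \<phi> \<longrightarrow>
        (Since a b \<in> lab w (s+1) \<longleftrightarrow> b \<in> lab w (s+1) \<or> (a \<in> lab w (s+1) \<and> Since a b \<in> lab w s)))"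
proof (intro conjI allI impI)
  fix a b
  show "Next a \<in> subf \<phi> \<Longrightarrow> (Next a \<in> lab w s \<longleftrightarrow> a \<in> lab w (s+1))" by (rule lab_Next)
  show "Prev a \<in> subf \<phi> \<Longrightarrow> (Prev a \<in> lab w (s+1) \<longleftrightarrow> a \<in> lab w s)" by (rule lab_Prev)
  show "Always a \<in> subf \<phi> \<Longrightarrow> (Always a \<in> lab w s \<longleftrightarrow> a \<in> lab w s \<and> Always a \<in> lab w (s+1))"
    by (rule lab_Always)
  show "Hist a \<in> subf \<phi> \<Longrightarrow> (Hist a \<in> lab w (s+1) \<longleftrightarrow> a \<in> lab w (s+1) \<and> Hist a \<in> lab w s)"
    using lab_Hist[of a w "s+1"] by simp
  show "Until a b \<in> subf \<phi> \<Longrightarrow>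
        (Until a b \<in> lab w s \<longleftrightarrow> b \<in> lab w s \<or> (a \<in> lab w s \<and> Until a b \<in> lab w (s+1)))"
    by (rule lab_Until)
  show "Since a b \<in> subf \<phi> \<Longrightarrow>
        (Since a b \<in> lab w (s+1) \<longleftrightarrow> b \<in> lab w (s+1) \<or> (a \<in> lab w (s+1) \<and> Since a b \<in> lab w s))"
    using lab_Since[of a b w "s+1"] by simp
qed
end

context qm
begin

lemma leq_iff: "(x, y) \<in> leq \<longleftrightarrow> x \<in> W \<and> y \<in> W \<and> tm x = tm y \<and> lb y \<subseteq> lb x"
  unfolding leq_def by simp

lemma dul: "disjoint_union_of_linear W leq"
  unfolding disjoint_union_of_linear_def
proof (intro conjI ballI impI)
  show "leq \<subseteq> W \<times> W" unfolding leq_def by blast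
next
  fix w assume w: "w \<in> W"
  show "(w, w) \<in> leq" using w by (simp add: leq_iff)
next
  fix w v assume w: "w \<in> W" and v: "v \<in> W" and h: "(w, v) \<in> leq \<and> (v, w) \<in> leq"
  have "tm w = tm v" using h leq_iff by blast
  moreover have "lb w = lb v" using h leq_iff by (meson subset_antisym)
  ultimately show "w = v" using I2[OF w v] by blast
next
  fix u w v assume "u \<in> W" "w \<in> W" "v \<in> W" "(u, w) \<in> leq \<and> (w, v) \<in> leq"
  then show "(u, v) \<in> leq" unfolding leq_iff by (metis order_trans)
next
  fix u w v assume u: "u \<in> W" and w: "w \<in> W" and v: "v \<in> W"
    and h: "v \<in> component W leq w \<and> u \<in> component W leq w"
  have "tm v = tm w" "tm u = tm w" using h unfolding comp[OF w] by simp_all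
  then show "u \<in> component W leq v" unfolding comp[OF v] using u by simp
qed

lemma lsp: "labelled_space (subf \<phi>) W leq lb"
  unfolding labelled_space_def
proof (intro conjI ballI allI impI)
  show "disjoint_union_of_linear W leq" by (rule dul)
next
  fix x assume "x \<in> W"
  then obtain w where "w \<in> wor M" "lab w (tm x) = lb x" using world_of by blast
  then show "is_type (subf \<phi>) (lb x)" using lab_type by metis
next
  fix x y assume "(x, y) \<in> leq" then show "lb y \<subseteq> lb x" by (simp add: leq_def)
next
  fix x a b assume x: "x \<in> W" and h: "Imp a b \<in> subf \<phi>" "Imp a b \<notin> lb x"
  obtain w where w: "w \<in> wor M" "lab w (tm x) = lb x" using world_of x by blast
  have ab: "a \<in> subf \<phi>" "b \<in> subf \<phi>" using cl_Imp h by auto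
  have "\<not> sat M w (tau (tm x)) (Imp a b)" using h w by (auto simp: lab_def)
  then obtain v where v: "v \<in> wor M" "mle M v w" "sat M v (tau (tm x)) a" "\<not> sat M v (tau (tm x)) b"
    by auto
  obtain y where y: "y \<in> W" "tm y = tm x" "lb y = lab v (tm x)" using node[of "tm x" v] I1[OF x] v(1) by blast
  have "lab w (tm x) \<subseteq> lab v (tm x)" using lab_mono[OF v(1) w(1) v(2)] .
  then have "lb x \<subseteq> lb y" using w y by simp
  then have "(y, x) \<in> leq" using x y by (simp add: leq_def)
  moreover have "a \<in> lb y" "b \<notin> lb y" using y v ab by (auto simp: lab_def)
  ultimately show "\<exists>v\<in>W. (v, x) \<in> leq \<and> a \<in> lb v \<and> b \<notin> lb v" using y by blast
next
  fix x a b assume x: "x \<in> W" and h: "Coimp a b \<in> lb x"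
  obtain w where w: "w \<in> wor M" "lab w (tm x) = lb x" using world_of x by blast
  have "lb x \<subseteq> subf \<phi>" using I1[OF x] slice_sub by blast
  then have ab: "a \<in> subf \<phi>" "b \<in> subf \<phi>" using cl_Coimp h by blast+
  have "Coimp a b \<in> lab w (tm x)" using h w by simp
  then have "sat M w (tau (tm x)) (Coimp a b)" by (simp add: lab_def)
  then obtain v where v: "v \<in> wor M" "mle M w v" "sat M v (tau (tm x)) a" "\<not> sat M v (tau (tm x)) b"
    by auto
  obtain y where y: "y \<in> W" "tm y = tm x" "lb y = lab v (tm x)" using node[of "tm x" v] I1[OF x] v(1) by blast
  have "lab v (tm x) \<subseteq> lab w (tm x)" using lab_mono[OF w(1) v(1) v(2)] .
  then have "lb y \<subseteq> lb x" using w y by simp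
  then have "(x, y) \<in> leq" using x y by (simp add: leq_def)
  moreover have "a \<in> lb y" "b \<notin> lb y" using y v ab by (auto simp: lab_def)
  ultimately show "\<exists>v\<in>W. (x, v) \<in> leq \<and> a \<in> lb v \<and> b \<notin> lb v" using y by blast
qed

lemma bis: "bi_serial W Rq"
  unfolding bi_serial_def
proof (intro ballI conjI)
  fix x assume x: "x \<in> W"
  obtain w where w: "w \<in> wor M" "lab w (tm x) = lb x" using world_of x by blast
  have xr: "C \<le> tm x" "tm x \<le> B" using I1 x by auto
  obtain t' where t': "(tm x, t') \<in> Ed"
  proof (cases "tm x < B")
    case True
    then have "(tm x, tm x + 1) \<in> Ed" using xr unfolding Ed_def by blast
    then show ?thesis using that by blast
  next
    case False
    then have "tm x = B" using xr by simp
    then have "(tm x, A) \<in> Ed" unfolding Ed_def by blast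
    then show ?thesis using that by blast
  qed
  from Ed_props[OF t'] have tr: "C \<le> t'" "t' \<le> B" "slice (tm x + 1) = slice t'" by auto
  have "lab w (tm x + 1) \<in> slice t'" using tr lab_in_slice[OF w(1)] by metis
  then obtain y where y: "y \<in> W" "tm y = t'" "lb y = lab w (tm x + 1)" using I3[OF tr(1) tr(2)] by blast
  show "\<exists>v. (x, v) \<in> Rq" using mkR[OF x y(1) _ w] t' y by auto
next
  fix x assume x: "x \<in> W"
  obtain w where w: "w \<in> wor M" "lab w (tm x) = lb x" using world_of x by blast
  have xr: "C \<le> tm x" "tm x \<le> B" using I1 x by auto
  show "\<exists>v. (v, x) \<in> Rq"
  proof (cases "C < tm x")
    case True
    obtain y where y: "y \<in> W" "tm y = tm x - 1" "lb y = lab w (tm x - 1)"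
      using node[of "tm x - 1" w] True xr w by auto
    have "(tm y, tm x) \<in> Ed" using y True xr by (force simp: Ed_def)
    then show ?thesis using mkR[OF y(1) x _ w(1)] y w by auto
  next
    case False
    then have tx: "tm x = C" using xr by simp
    have "lb x \<in> slice E" using I1[OF x] sliceE tx by simp
    then obtain u where u: "u \<in> wor M" "lab u E = lb x" by (auto simp: slice_def)
    obtain y where y: "y \<in> W" "tm y = E - 1" "lb y = lab u (E - 1)"
      using node[of "E - 1" u] u ord1 ord2 ord3 ord4 by auto
    have "(tm y, tm x) \<in> Ed" using y tx by (simp add: Ed_def)
    then show ?thesis using mkR[OF y(1) x _ u(1)] y u by auto
  qed
qed

end



context qm
begin

lemma fc: "fully_confluent leq Rq"
  unfolding fully_confluent_def
proof (intro conjI allI impI)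
  fix x x' y' assume h: "(x, x') \<in> leq \<and> (x', y') \<in> Rq"
  then have x: "x \<in> W" "x' \<in> W" "tm x = tm x'" "lb x' \<subseteq> lb x" using leq_iff by blast+
  from h RD obtain w where w: "w \<in> wor M" "lab w (tm x') = lb x'" "lab w (tm x' + 1) = lb y'"
    "(tm x', tm y') \<in> Ed" "y' \<in> W" by blast
  obtain u where u: "u \<in> wor M" "lab u (tm x) = lb x" using world_of x(1) by blast
  have "lab w (tm x) \<subseteq> lab u (tm x)" using x w u by simp
  then obtain u' where u': "u' \<in> wor M" "lab u' (tm x) = lb x" "mle M u' w" using WC[OF w(1) u(1)] u by metis
  from Ed_props[OF w(4)] have tr: "C \<le> tm y'" "tm y' \<le> B" "slice (tm x' + 1) = slice (tm y')" by auto
  have "lab u' (tm x + 1) \<in> slice (tm y')" using tr x lab_in_slice[OF u'(1)] by metis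
  then obtain y where y: "y \<in> W" "tm y = tm y'" "lb y = lab u' (tm x + 1)" using I3[OF tr(1) tr(2)] by blast
  have "(x, y) \<in> Rq" using mkR[OF x(1) y(1) _ u'(1) u'(2)] w(4) x y by simp
  moreover have "lab w (tm x + 1) \<subseteq> lab u' (tm x + 1)" using lab_mono[OF u'(1) w(1) u'(3)] .
  then have "(y, y') \<in> leq" using y w x leq_iff by simp
  ultimately show "\<exists>y. (x, y) \<in> Rq \<and> (y, y') \<in> leq" by blast
next
  fix x x' y assume h: "(x, x') \<in> leq \<and> (x, y) \<in> Rq"
  then have x: "x \<in> W" "x' \<in> W" "tm x = tm x'" "lb x' \<subseteq> lb x" using leq_iff by blast+
  from h RD obtain u where u: "u \<in> wor M" "lab u (tm x) = lb x" "lab u (tm x + 1) = lb y"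
    "(tm x, tm y) \<in> Ed" "y \<in> W" by blast
  obtain w where w: "w \<in> wor M" "lab w (tm x') = lb x'" using world_of x(2) by blast
  have "lab w (tm x) \<subseteq> lab u (tm x)" using x w u by simp
  then obtain w' where w': "w' \<in> wor M" "lab w' (tm x) = lb x'" "mle M u w'" using WC'[OF u(1) w(1)] w x by metis
  from Ed_props[OF u(4)] have tr: "C \<le> tm y" "tm y \<le> B" "slice (tm x + 1) = slice (tm y)" by auto
  have "lab w' (tm x + 1) \<in> slice (tm y)" using tr lab_in_slice[OF w'(1)] by metis
  then obtain y' where y': "y' \<in> W" "tm y' = tm y" "lb y' = lab w' (tm x + 1)" using I3[OF tr(1) tr(2)] by blast
  have "(x', y') \<in> Rq" using mkR[OF x(2) y'(1) _ w'(1)] u(4) x y' w' by simp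
  moreover have "lab w' (tm x + 1) \<subseteq> lab u (tm x + 1)" using lab_mono[OF u(1) w'(1) w'(3)] .
  then have "(y, y') \<in> leq" using y' u leq_iff by simp
  ultimately show "\<exists>y'. (x', y') \<in> Rq \<and> (y, y') \<in> leq" by blast
next
  fix x' y' y assume h: "(x', y') \<in> Rq \<and> (y, y') \<in> leq"
  then have yy: "y \<in> W" "y' \<in> W" "tm y = tm y'" "lb y' \<subseteq> lb y" using leq_iff by blast+
  from h RD obtain w where w: "w \<in> wor M" "lab w (tm x') = lb x'" "lab w (tm x' + 1) = lb y'"
    "(tm x', tm y') \<in> Ed" "x' \<in> W" by blast
  from Ed_props[OF w(4)] have tr: "C \<le> tm x'" "tm x' \<le> B" "slice (tm x' + 1) = slice (tm y')" by auto
  have "lb y \<in> slice (tm x' + 1)" using I1[OF yy(1)] yy tr by simp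
  then obtain v where v: "v \<in> wor M" "lab v (tm x' + 1) = lb y" by (auto simp: slice_def)
  have "lab w (tm x' + 1) \<subseteq> lab v (tm x' + 1)" using v w yy by simp
  then obtain v' where v': "v' \<in> wor M" "lab v' (tm x' + 1) = lb y" "mle M v' w" using WC[OF w(1) v(1)] v by metis
  obtain x where x: "x \<in> W" "tm x = tm x'" "lb x = lab v' (tm x')" using node[OF tr(1) tr(2) v'(1)] by blast
  have "lab w (tm x') \<subseteq> lab v' (tm x')" using lab_mono[OF v'(1) w(1) v'(3)] .
  then have "(x, x') \<in> leq" using x w leq_iff by simp
  moreover have "(x, y) \<in> Rq" using mkR[OF x(1) yy(1) _ v'(1)] w(4) x yy v' by simp
  ultimately show "\<exists>x. (x, x') \<in> leq \<and> (x, y) \<in> Rq" by blast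
next
  fix x y y' assume h: "(x, y) \<in> Rq \<and> (y, y') \<in> leq"
  then have yy: "y \<in> W" "y' \<in> W" "tm y = tm y'" "lb y' \<subseteq> lb y" using leq_iff by blast+
  from h RD obtain u where u: "u \<in> wor M" "lab u (tm x) = lb x" "lab u (tm x + 1) = lb y"
    "(tm x, tm y) \<in> Ed" "x \<in> W" by blast
  from Ed_props[OF u(4)] have tr: "C \<le> tm x" "tm x \<le> B" "slice (tm x + 1) = slice (tm y)" by auto
  have "lb y' \<in> slice (tm x + 1)" using I1[OF yy(2)] yy tr by simp
  then obtain v where v: "v \<in> wor M" "lab v (tm x + 1) = lb y'" by (auto simp: slice_def)
  have "lab v (tm x + 1) \<subseteq> lab u (tm x + 1)" using v u yy by simp
  then obtain v' where v': "v' \<in> wor M" "lab v' (tm x + 1) = lb y'" "mle M u v'" using WC'[OF u(1) v(1)] v by metis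
  obtain x' where x': "x' \<in> W" "tm x' = tm x" "lb x' = lab v' (tm x)" using node[OF tr(1) tr(2) v'(1)] by blast
  have "lab v' (tm x) \<subseteq> lab u (tm x)" using lab_mono[OF u(1) v'(1) v'(3)] .
  then have "(x, x') \<in> leq" using x' u leq_iff by simp
  moreover have "(x', y') \<in> Rq" using mkR[OF x'(1) yy(2) _ v'(1)] u(4) x' yy v' by simp
  ultimately show "\<exists>x'. (x, x') \<in> leq \<and> (x', y') \<in> Rq" by blast
qed

end



context qm
begin

lemma cvx: "convex_rel leq Rq"
  unfolding convex_rel_def convex_set_def
proof (intro allI conjI ballI impI)
  fix x y1 y2 z assume y1: "y1 \<in> Rq `` {x}" and y2: "y2 \<in> Rq `` {x}"
    and h: "(y1, z) \<in> leq \<and> (z, y2) \<in> leq"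
  have r1: "(x, y1) \<in> Rq" and r2: "(x, y2) \<in> Rq" using y1 y2 by auto
  have zz: "z \<in> W" "tm z = tm y1" "lb z \<subseteq> lb y1" "lb y2 \<subseteq> lb z" using h leq_iff by auto
  from RD[OF r1] obtain u1 where u1: "u1 \<in> wor M" "lab u1 (tm x) = lb x" "lab u1 (tm x + 1) = lb y1"
    and e1: "(tm x, tm y1) \<in> Ed" and xW: "x \<in> W" by blast
  from RD[OF r2] obtain u2 where u2: "u2 \<in> wor M" "lab u2 (tm x) = lb x" "lab u2 (tm x + 1) = lb y2"
    by blast
  from Ed_props[OF e1] have "slice (tm x + 1) = slice (tm y1)" by blast
  then have "lb z \<in> slice (tm x + 1)" using I1[OF zz(1)] zz by simp
  then obtain v where v: "v \<in> wor M" "lab v (tm x + 1) = lb z" by (auto simp: slice_def)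
  obtain w where w: "w \<in> wor M" "lab w (tm x) = lb x" "lab w (tm x + 1) = lb z"
    using CV[OF u1(1) u2(1) v(1) u1(2) u2(2)] u1 u2 v zz by metis
  have "(x, z) \<in> Rq" using mkR[OF xW zz(1) _ w(1) w(2) w(3)] e1 zz by simp
  then show "z \<in> Rq `` {x}" by blast
next
  fix y x1 x2 z assume x1: "x1 \<in> Rq\<inverse> `` {y}" and x2: "x2 \<in> Rq\<inverse> `` {y}"
    and h: "(x1, z) \<in> leq \<and> (z, x2) \<in> leq"
  have r1: "(x1, y) \<in> Rq" and r2: "(x2, y) \<in> Rq" using x1 x2 by auto
  have zz: "z \<in> W" "tm z = tm x1" "tm x2 = tm x1" "lb z \<subseteq> lb x1" "lb x2 \<subseteq> lb z" using h leq_iff by auto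
  from RD[OF r1] obtain u1 where u1: "u1 \<in> wor M" "lab u1 (tm x1) = lb x1" "lab u1 (tm x1 + 1) = lb y"
    and e1: "(tm x1, tm y) \<in> Ed" and yW: "y \<in> W" by blast
  from RD[OF r2] obtain u2 where u2: "u2 \<in> wor M" "lab u2 (tm x2) = lb x2" "lab u2 (tm x2 + 1) = lb y"
    by blast
  have "lb z \<in> slice (tm x1)" using I1[OF zz(1)] zz by simp
  then obtain v where v: "v \<in> wor M" "lab v (tm x1) = lb z" by (auto simp: slice_def)
  have u2': "lab u2 (tm x1) = lb x2" "lab u2 (tm x1 + 1) = lb y" using u2 zz by simp_all
  obtain w where w: "w \<in> wor M" "lab w (tm x1 + 1) = lb y" "lab w (tm x1) = lb z"
    using CV[OF u1(1) u2(1) v(1) u1(3) u2'(2)] u1 u2' v zz by metis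
  have "(z, y) \<in> Rq" using mkR[OF zz(1) yW _ w(1)] e1 zz w by simp
  then show "z \<in> Rq\<inverse> `` {y}" by blast
qed

lemma sens: "sensible (subf \<phi>) lb Rq"
  unfolding sensible_def
proof (intro allI impI)
  fix x y assume r: "(x, y) \<in> Rq"
  from RD[OF r] obtain w where w: "w \<in> wor M" "lab w (tm x) = lb x" "lab w (tm x + 1) = lb y" by blast
  have e1: "lb x = lab w (tm x)" "lb y = lab w (tm x + 1)" using w by simp_all
  show "(\<forall>a. Next a \<in> subf \<phi> \<longrightarrow> (Next a \<in> lb x) = (a \<in> lb y)) \<and>
        (\<forall>a. Prev a \<in> subf \<phi> \<longrightarrow> (Prev a \<in> lb y) = (a \<in> lb x)) \<and>
        (\<forall>a. Always a \<in> subf \<phi> \<longrightarrow> (Always a \<in> lb x) = (a \<in> lb x \<and> Always a \<in> lb y)) \<and>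
        (\<forall>a. Hist a \<in> subf \<phi> \<longrightarrow> (Hist a \<in> lb y) = (a \<in> lb y \<and> Hist a \<in> lb x)) \<and>
        (\<forall>a b. Until a b \<in> subf \<phi> \<longrightarrow> (Until a b \<in> lb x) = (b \<in> lb x \<or> a \<in> lb x \<and> Until a b \<in> lb y)) \<and>
        (\<forall>a b. Since a b \<in> subf \<phi> \<longrightarrow> (Since a b \<in> lb y) = (b \<in> lb y \<or> a \<in> lb y \<and> Since a b \<in> lb x))"
    unfolding e1 by (rule sens_lab)
qed

lemma lb_sub: "x \<in> W \<Longrightarrow> lb x \<subseteq> subf \<phi>" using I1 slice_sub by blast

lemma osens: "omega_sensible (subf \<phi>) W lb Rq"
  unfolding omega_sensible_def
proof (intro ballI conjI allI impI)
  fix x a assume x: "x \<in> W" and h: "Always a \<in> subf \<phi>" "Always a \<notin> lb x"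
  show "\<exists>n v. (x, v) \<in> Rq ^^ n \<and> a \<notin> lb v" using omegaF[OF h(1) x] h by simp
next
  fix x a assume x: "x \<in> W" and h: "Hist a \<in> subf \<phi>" "Hist a \<notin> lb x"
  show "\<exists>n v. (v, x) \<in> Rq ^^ n \<and> a \<notin> lb v" using omegaB[OF h(1) x] h by simp
next
  fix x a b assume x: "x \<in> W" and h: "Until a b \<in> lb x"
  have "Until a b \<in> subf \<phi>" using lb_sub[OF x] h by blast
  then show "\<exists>n v. (x, v) \<in> Rq ^^ n \<and> b \<in> lb v" using omegaF[OF _ x] h by fastforce
next
  fix x a b assume x: "x \<in> W" and h: "Since a b \<in> lb x"
  have "Since a b \<in> subf \<phi>" using lb_sub[OF x] h by blast
  then show "\<exists>n v. (v, x) \<in> Rq ^^ n \<and> b \<in> lb v" using omegaB[OF _ x] h by fastforce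
qed

lemma qmod: "quasimodel (subf \<phi>) W leq lb Rq"
  unfolding quasimodel_def
  using lsp bis fc cvx sens osens by (auto simp: Rq_def)

lemma height: "height_le W leq (card (subf \<phi>) + 1)"
  unfolding height_le_def
proof (intro allI impI)
  fix xs assume h: "set xs \<subseteq> W \<and> sorted_wrt (lt_in leq) xs"
  have "sorted_wrt (\<lambda>a b. card (lb b) < card (lb a)) xs"
  proof (rule sorted_wrt_mono_rel[of xs "lt_in leq"])
    fix a b assume ab: "a \<in> set xs" "b \<in> set xs" "lt_in leq a b"
    then have "(a, b) \<in> leq" "a \<noteq> b" by (auto simp: lt_in_def)
    then have l: "a \<in> W" "b \<in> W" "tm a = tm b" "lb b \<subseteq> lb a" using leq_iff by auto
    have "lb b \<noteq> lb a" using I2[OF l(1) l(2) l(3)] \<open>a \<noteq> b\<close> by metis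
    then have "lb b \<subset> lb a" using l by blast
    moreover have "finite (lb a)" using lb_sub[OF l(1)] finite_subf finite_subset by blast
    ultimately show "card (lb b) < card (lb a)" by (rule psubset_card_mono[rotated])
  next
    show "sorted_wrt (lt_in leq) xs" using h by blast
  qed
  moreover have "\<forall>x\<in>set xs. card (lb x) \<le> card (subf \<phi>)"
    using h lb_sub finite_subf card_mono by (metis subsetD)
  ultimately show "length xs \<le> card (subf \<phi>) + 1" using chain_len by fastforce
qed

lemma falsified: "\<exists>x\<in>W. \<phi> \<notin> lb x"
proof -
  have "C \<le> 0" "0 \<le> B" using ord1 ord2 ord3 ord4 by auto
  then obtain x where x: "x \<in> W" "lb x = lab w0 0" using node w0 by metis
  have "\<phi> \<notin> lab w0 0" using fals by (simp add: lab_def tau0)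
  then show ?thesis using x by blast
qed

lemma up: "ultimately_periodic (subf \<phi>) W leq lb Rq"
  unfolding ultimately_periodic_def
proof (intro conjI)
  show "quasimodel (subf \<phi>) W leq lb Rq" by (rule qmod)
  define i where "i = nat (A - E + 1)"
  define l where "l = nat (B - A + 1)"
  define l' where "l' = nat (E - C)"
  have hi: "int i = A - E + 1" "int l = B - A + 1" "int l' = E - C"
    using ord1 ord2 ord3 ord4 by (simp_all add: i_def l_def l'_def)
  have iv: "{- (int 0 + int l' - 1) .. int i + int l - 1} = {C - E + 1 .. B - E + 1}"
    using hi by simp
  let ?\<pi> = "\<lambda>x. tm x - (E - 1)"
  have P1: "l \<ge> 1" "l' \<ge> 1" using hi ord1 ord4 by linarith+
  have P2: "\<forall>w\<in>W. ?\<pi> w \<in> {- (int 0 + int l' - 1) .. int i + int l - 1}"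
    unfolding iv using I1 by auto
  have P3: "\<forall>t\<in>{- (int 0 + int l' - 1) .. int i + int l - 1}. \<exists>w\<in>W. ?\<pi> w = t"
  proof
    fix t assume "t \<in> {- (int 0 + int l' - 1) .. int i + int l - 1}"
    then have "C \<le> t + (E - 1)" "t + (E - 1) \<le> B" unfolding iv by auto
    then obtain x where "x \<in> W" "tm x = t + (E - 1)" using node w0 by metis
    then show "\<exists>w\<in>W. ?\<pi> w = t" by (intro bexI[of _ x]) auto
  qed
  have P4: "\<forall>w\<in>W. {v \<in> W. ?\<pi> v = ?\<pi> w} = component W leq w"
    using comp by auto
  have P5: "\<forall>w v. (w, v) \<in> Rq \<longrightarrow> (?\<pi> w, ?\<pi> v) \<in> lasso_rel i 0 l l'"
  proof (intro allI impI)
    fix w v assume "(w, v) \<in> Rq"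
    then have "(tm w, tm v) \<in> Ed" using RD by blast
    then consider t where "C \<le> t" "t < B" "tm w = t" "tm v = t + 1"
      | "tm w = B" "tm v = A" | "tm w = E - 1" "tm v = C"
      unfolding Ed_def by blast
    then show "(?\<pi> w, ?\<pi> v) \<in> lasso_rel i 0 l l'"
    proof cases
      case 1 then show ?thesis unfolding lasso_rel_def using hi by auto
    next
      case 2 then show ?thesis unfolding lasso_rel_def using hi by auto
    next
      case 3 then show ?thesis unfolding lasso_rel_def using hi by auto
    qed
  qed
  show "\<exists>(i::nat) (i'::nat) (l::nat) (l'::nat) (\<pi>::nat \<Rightarrow> int).
        l \<ge> 1 \<and> l' \<ge> 1 \<and>
        (\<forall>w\<in>W. \<pi> w \<in> {- (int i' + int l' - 1) .. int i + int l - 1}) \<and>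
        (\<forall>t\<in>{- (int i' + int l' - 1) .. int i + int l - 1}. \<exists>w\<in>W. \<pi> w = t) \<and>
        (\<forall>w\<in>W. {v \<in> W. \<pi> v = \<pi> w} = component W leq w) \<and>
        (\<forall>w v. (w, v) \<in> Rq \<longrightarrow> (\<pi> w, \<pi> v) \<in> lasso_rel i i' l l')"
    apply (rule exI[of _ i], rule exI[of _ "0::nat"], rule exI[of _ l], rule exI[of _ l'], rule exI[of _ ?\<pi>])
    using P1 P2 P3 P4 P5 by blast
qed

lemma main: "\<exists>(W::nat set) le lab R. ultimately_periodic (subf \<phi>) W le lab R \<and>
           height_le W le (card (subf \<phi>) + 1) \<and> (\<exists>w\<in>W. \<phi> \<notin> lab w)"
  using up height falsified by blast

end



lemma unif_bound: "finite X \<Longrightarrow> (\<forall>x\<in>X. \<exists>N::nat. \<forall>m\<ge>N. P x m) \<Longrightarrow> \<exists>N. \<forall>x\<in>X. \<forall>m\<ge>N. P x m"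
proof (induction X rule: finite_induct)
  case empty then show ?case by simp
next
  case (insert x F)
  then obtain N1 where N1: "\<forall>m\<ge>N1. P x m" by blast
  from insert obtain N2 where N2: "\<forall>y\<in>F. \<forall>m\<ge>N2. P y m" by blast
  show ?case using N1 N2 by (intro exI[of _ "max N1 N2"]) auto
qed

lemma my_unbounded: "infinite (S::nat set) \<Longrightarrow> \<exists>n>m. n \<in> S"
proof (rule ccontr)
  assume "infinite S" "\<not> (\<exists>n>m. n \<in> S)"
  then have "S \<subseteq> {..m}" by (auto simp: not_less)
  then show False using \<open>infinite S\<close> finite_subset by blast
qed

context qbase
begin

lemma slice_fin: "finite (range (\<lambda>n. slice (g n)))"
proof -
  have "range (\<lambda>n. slice (g n)) \<subseteq> Pow (Pow (subf \<phi>))" using slice_sub by blast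
  moreover have "finite (Pow (Pow (subf \<phi>)))" using finite_subf by simp
  ultimately show ?thesis by (rule finite_subset)
qed

lemma slice_fin1: "finite (slice t)"
proof -
  have "slice t \<subseteq> Pow (subf \<phi>)" using slice_sub by blast
  moreover have "finite (Pow (subf \<phi>))" using finite_subf by simp
  ultimately show ?thesis by (rule finite_subset)
qed

lemma exF: "\<exists>A B. 0 \<le> A \<and> A \<le> B \<and> slice (B+1) = slice A \<and>
   (\<forall>L\<in>slice A. \<exists>u\<in>wor M. lab u A = L \<and> (\<forall>e\<in>subf \<phi>. pendF e L \<longrightarrow>
                 (\<exists>d::nat. A + int d \<le> B \<and> fulF e (lab u (A + int d)))))"
proof -
  obtain S where S: "infinite ((\<lambda>n::nat. slice (int n)) -` {S})"
    using inf_img_fin_domE[OF slice_fin[of int] infinite_UNIV_nat] by blast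
  let ?K = "(\<lambda>n::nat. slice (int n)) -` {S}"
  obtain a where a: "a \<in> ?K" using S by (metis finite.emptyI equals0I)
  define A where "A = int a"
  define u where "u L = (SOME u. u \<in> wor M \<and> lab u A = L)" for L
  have u: "u L \<in> wor M \<and> lab (u L) A = L" if "L \<in> slice A" for L
  proof -
    from that obtain w where w: "w \<in> wor M" "lab w A = L" unfolding slice_def by blast
    show ?thesis unfolding u_def using someI[of "\<lambda>u. u \<in> wor M \<and> lab u A = L" w] w by blast
  qed
  have fx: "finite (slice A \<times> subf \<phi>)" by (simp add: finite_subf slice_fin1)
  have "\<forall>p\<in>slice A \<times> subf \<phi>. \<exists>N::nat. \<forall>m\<ge>N. (pendF (snd p) (fst p) \<longrightarrow>
          (\<exists>d. d \<le> m \<and> fulF (snd p) (lab (u (fst p)) (A + int d))))"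
  proof
    fix p assume p: "p \<in> slice A \<times> subf \<phi>"
    obtain L e where Le: "p = (L, e)" by (cases p) blast
    show "\<exists>N::nat. \<forall>m\<ge>N. (pendF (snd p) (fst p) \<longrightarrow>
          (\<exists>d. d \<le> m \<and> fulF (snd p) (lab (u (fst p)) (A + int d))))"
    proof (cases "pendF e L")
      case True
      have "pendF e (lab (u L) A)" using u[of L] p Le True by simp
      moreover have "e \<in> subf \<phi>" using p Le by simp
      ultimately obtain n where "fulF e (lab (u L) (A + int n))" using evF by blast
      then show ?thesis using Le by (intro exI[of _ n]) auto
    next
      case False then show ?thesis using Le by simp
    qed
  qed
  then have "\<exists>N. \<forall>p\<in>slice A \<times> subf \<phi>. \<forall>m\<ge>N. (pendF (snd p) (fst p) \<longrightarrow>
          (\<exists>d. d \<le> m \<and> fulF (snd p) (lab (u (fst p)) (A + int d))))"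
    by (rule unif_bound[OF fx])
  then obtain N where N: "\<forall>p\<in>slice A \<times> subf \<phi>. \<forall>m\<ge>N. (pendF (snd p) (fst p) \<longrightarrow>
          (\<exists>d. d \<le> m \<and> fulF (snd p) (lab (u (fst p)) (A + int d))))"
    by (rule exE)
  have "\<forall>m. \<exists>n>m. n \<in> ?K" using S my_unbounded by blast
  then obtain b where b: "b > a + N" "b \<in> ?K" by blast
  define B where "B = int b - 1"
  have "slice (B+1) = slice A" using a b by (simp add: A_def B_def)
  moreover have "0 \<le> A" "A \<le> B" using b by (auto simp: A_def B_def)
  moreover have "\<forall>L\<in>slice A. \<exists>u\<in>wor M. lab u A = L \<and> (\<forall>e\<in>subf \<phi>. pendF e L \<longrightarrow>
                 (\<exists>d::nat. A + int d \<le> B \<and> fulF e (lab u (A + int d))))"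
  proof
    fix L assume L: "L \<in> slice A"
    have "\<forall>e\<in>subf \<phi>. pendF e L \<longrightarrow> (\<exists>d::nat. A + int d \<le> B \<and> fulF e (lab (u L) (A + int d)))"
    proof (intro ballI impI)
      fix e assume e: "e \<in> subf \<phi>" "pendF e L"
      have "(L, e) \<in> slice A \<times> subf \<phi>" using L e by simp
      then have "pendF e L \<longrightarrow> (\<exists>d. d \<le> N \<and> fulF e (lab (u L) (A + int d)))"
        using N by fastforce
      then obtain d where "d \<le> N" "fulF e (lab (u L) (A + int d))" using e by blast
      moreover have "A + int d \<le> B" using \<open>d \<le> N\<close> b by (simp add: A_def B_def)
      ultimately show "\<exists>d::nat. A + int d \<le> B \<and> fulF e (lab (u L) (A + int d))" by blast
    qed
    then show "\<exists>u\<in>wor M. lab u A = L \<and> (\<forall>e\<in>subf \<phi>. pendF e L \<longrightarrow>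
                 (\<exists>d::nat. A + int d \<le> B \<and> fulF e (lab u (A + int d))))" using u[OF L] by blast
  qed
  ultimately show ?thesis by blast
qed

lemma exB: "\<exists>C E. C < E \<and> E \<le> 0 \<and> slice C = slice E \<and>
   (\<forall>L\<in>slice E. \<exists>u\<in>wor M. lab u E = L \<and> (\<forall>e\<in>subf \<phi>. pendB e L \<longrightarrow>
                 (\<exists>d::nat. C \<le> E - int d \<and> fulB e (lab u (E - int d)))))"
proof -
  obtain S where S: "infinite ((\<lambda>n::nat. slice (- int n)) -` {S})"
    using inf_img_fin_domE[OF slice_fin[of "\<lambda>n. - int n"] infinite_UNIV_nat] by blast
  let ?K = "(\<lambda>n::nat. slice (- int n)) -` {S}"
  obtain a where a: "a \<in> ?K" using S by (metis finite.emptyI equals0I)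
  define E where "E = - int a"
  define u where "u L = (SOME u. u \<in> wor M \<and> lab u E = L)" for L
  have u: "u L \<in> wor M \<and> lab (u L) E = L" if "L \<in> slice E" for L
  proof -
    from that obtain w where w: "w \<in> wor M" "lab w E = L" unfolding slice_def by blast
    show ?thesis unfolding u_def using someI[of "\<lambda>u. u \<in> wor M \<and> lab u E = L" w] w by blast
  qed
  have fx: "finite (slice E \<times> subf \<phi>)" by (simp add: finite_subf slice_fin1)
  have "\<forall>p\<in>slice E \<times> subf \<phi>. \<exists>N::nat. \<forall>m\<ge>N. (pendB (snd p) (fst p) \<longrightarrow>
          (\<exists>d. d \<le> m \<and> fulB (snd p) (lab (u (fst p)) (E - int d))))"
  proof
    fix p assume p: "p \<in> slice E \<times> subf \<phi>"
    obtain L e where Le: "p = (L, e)" by (cases p) blast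
    show "\<exists>N::nat. \<forall>m\<ge>N. (pendB (snd p) (fst p) \<longrightarrow>
          (\<exists>d. d \<le> m \<and> fulB (snd p) (lab (u (fst p)) (E - int d))))"
    proof (cases "pendB e L")
      case True
      have "pendB e (lab (u L) E)" using u[of L] p Le True by simp
      moreover have "e \<in> subf \<phi>" using p Le by simp
      ultimately obtain n where "fulB e (lab (u L) (E - int n))" using evB by blast
      then show ?thesis using Le by (intro exI[of _ n]) auto
    next
      case False then show ?thesis using Le by simp
    qed
  qed
  then have "\<exists>N. \<forall>p\<in>slice E \<times> subf \<phi>. \<forall>m\<ge>N. (pendB (snd p) (fst p) \<longrightarrow>
          (\<exists>d. d \<le> m \<and> fulB (snd p) (lab (u (fst p)) (E - int d))))"
    by (rule unif_bound[OF fx])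
  then obtain N where N: "\<forall>p\<in>slice E \<times> subf \<phi>. \<forall>m\<ge>N. (pendB (snd p) (fst p) \<longrightarrow>
          (\<exists>d. d \<le> m \<and> fulB (snd p) (lab (u (fst p)) (E - int d))))"
    by (rule exE)
  have "\<forall>m. \<exists>n>m. n \<in> ?K" using S my_unbounded by blast
  then obtain b where b: "b > a + N" "b \<in> ?K" by blast
  define C where "C = - int b"
  have "slice C = slice E" using a b by (simp add: E_def C_def)
  moreover have "C < E" "E \<le> 0" using b by (auto simp: E_def C_def)
  moreover have "\<forall>L\<in>slice E. \<exists>u\<in>wor M. lab u E = L \<and> (\<forall>e\<in>subf \<phi>. pendB e L \<longrightarrow>
                 (\<exists>d::nat. C \<le> E - int d \<and> fulB e (lab u (E - int d))))"
  proof
    fix L assume L: "L \<in> slice E"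
    have "\<forall>e\<in>subf \<phi>. pendB e L \<longrightarrow> (\<exists>d::nat. C \<le> E - int d \<and> fulB e (lab (u L) (E - int d)))"
    proof (intro ballI impI)
      fix e assume e: "e \<in> subf \<phi>" "pendB e L"
      have "(L, e) \<in> slice E \<times> subf \<phi>" using L e by simp
      then have "pendB e L \<longrightarrow> (\<exists>d. d \<le> N \<and> fulB e (lab (u L) (E - int d)))"
        using N by fastforce
      then obtain d where "d \<le> N" "fulB e (lab (u L) (E - int d))" using e by blast
      moreover have "C \<le> E - int d" using \<open>d \<le> N\<close> b by (simp add: E_def C_def)
      ultimately show "\<exists>d::nat. C \<le> E - int d \<and> fulB e (lab (u L) (E - int d))" by blast
    qed
    then show "\<exists>u\<in>wor M. lab u E = L \<and> (\<forall>e\<in>subf \<phi>. pendB e L \<longrightarrow>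
                 (\<exists>d::nat. C \<le> E - int d \<and> fulB e (lab u (E - int d))))" using u[OF L] by blast
  qed
  ultimately show ?thesis by blast
qed

lemma exQ: "\<exists>(W::nat set) (tm::nat \<Rightarrow> int) lb. (\<forall>x. x \<in> W \<longrightarrow> C \<le> tm x \<and> tm x \<le> B \<and> lb x \<in> slice (tm x)) \<and>
    (\<forall>x y. x \<in> W \<longrightarrow> y \<in> W \<longrightarrow> tm x = tm y \<longrightarrow> lb x = lb y \<longrightarrow> x = y) \<and>
    (\<forall>t L. C \<le> t \<longrightarrow> t \<le> B \<longrightarrow> L \<in> slice t \<longrightarrow> (\<exists>x\<in>W. tm x = t \<and> (lb x :: 'a fm set) = L))"
proof -
  define Q where "Q = {(t, L). C \<le> t \<and> t \<le> B \<and> L \<in> slice t}"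
  have "Q \<subseteq> {C..B} \<times> Pow (subf \<phi>)" unfolding Q_def using slice_sub by auto
  moreover have "finite ({C..B} \<times> Pow (subf \<phi>))"
    by (intro finite_SigmaI finite_atLeastAtMost_int) (simp add: finite_subf)
  ultimately have "finite Q" by (rule finite_subset)
  then obtain f :: "int \<times> 'a fm set \<Rightarrow> nat" where f: "inj_on f Q"
    using finite_imp_inj_to_nat_seg[of Q] by blast
  define dec where "dec = the_inv_into Q f"
  have d1: "dec (f q) = q" if "q \<in> Q" for q using the_inv_into_f_f[OF f that] by (simp add: dec_def)
  have P1: "\<forall>x. x \<in> f ` Q \<longrightarrow> C \<le> fst (dec x) \<and> fst (dec x) \<le> B \<and> snd (dec x) \<in> slice (fst (dec x))"
  proof (intro allI impI)
    fix x assume "x \<in> f ` Q"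
    then obtain q where q: "q \<in> Q" "x = f q" by blast
    then have "dec x = q" using d1 by simp
    then show "C \<le> fst (dec x) \<and> fst (dec x) \<le> B \<and> snd (dec x) \<in> slice (fst (dec x))"
      using q(1) unfolding Q_def by (cases q) simp
  qed
  have P2: "\<forall>x y. x \<in> f ` Q \<longrightarrow> y \<in> f ` Q \<longrightarrow> fst (dec x) = fst (dec y) \<longrightarrow> snd (dec x) = snd (dec y) \<longrightarrow> x = y"
  proof (intro allI impI)
    fix x y assume "x \<in> f ` Q" "y \<in> f ` Q" "fst (dec x) = fst (dec y)" "snd (dec x) = snd (dec y)"
    then obtain q q' where q: "q \<in> Q" "x = f q" "q' \<in> Q" "y = f q'" by blast
    then have "dec x = q" "dec y = q'" using d1 by simp_all
    then have "q = q'" using \<open>fst (dec x) = fst (dec y)\<close> \<open>snd (dec x) = snd (dec y)\<close> by (simp add: prod_eq_iff)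
    then show "x = y" using q by simp
  qed
  have P3: "\<forall>t L. C \<le> t \<longrightarrow> t \<le> B \<longrightarrow> L \<in> slice t \<longrightarrow> (\<exists>x\<in>f ` Q. fst (dec x) = t \<and> snd (dec x) = L)"
  proof (intro allI impI)
    fix t L assume "C \<le> t" "t \<le> B" "L \<in> slice t"
    then have tq: "(t, L) \<in> Q" by (simp add: Q_def)
    then have "dec (f (t, L)) = (t, L)" by (rule d1)
    then show "\<exists>x\<in>f ` Q. fst (dec x) = t \<and> snd (dec x) = L" using tq by (intro bexI[of _ "f (t, L)"]) simp_all
  qed
  show ?thesis
    apply (rule exI[of _ "f ` Q"], rule exI[of _ "\<lambda>x. fst (dec x)"], rule exI[of _ "\<lambda>x. snd (dec x)"])
    using P1 P2 P3 by blast
qed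

lemma exists_qm: "\<exists>A B C E W tm lb. qm M \<phi> w0 t0 A B C E W tm lb"
proof -
  obtain A B where AB: "0 \<le> A" "A \<le> B" "slice (B+1) = slice A"
    "\<forall>L\<in>slice A. \<exists>u\<in>wor M. lab u A = L \<and> (\<forall>e\<in>subf \<phi>. pendF e L \<longrightarrow>
                 (\<exists>d::nat. A + int d \<le> B \<and> fulF e (lab u (A + int d))))" using exF by blast
  obtain C E where CE: "C < E" "E \<le> 0" "slice C = slice E"
    "\<forall>L\<in>slice E. \<exists>u\<in>wor M. lab u E = L \<and> (\<forall>e\<in>subf \<phi>. pendB e L \<longrightarrow>
                 (\<exists>d::nat. C \<le> E - int d \<and> fulB e (lab u (E - int d))))" using exB by blast
  obtain W :: "nat set" and tm :: "nat \<Rightarrow> int" and lb :: "nat \<Rightarrow> 'a fm set" where Q: "\<forall>x. x \<in> W \<longrightarrow> C \<le> tm x \<and> tm x \<le> B \<and> lb x \<in> slice (tm x)"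
    "\<forall>x y. x \<in> W \<longrightarrow> y \<in> W \<longrightarrow> tm x = tm y \<longrightarrow> lb x = lb y \<longrightarrow> x = y"
    "\<forall>t L. C \<le> t \<longrightarrow> t \<le> B \<longrightarrow> L \<in> slice t \<longrightarrow> (\<exists>x\<in>W. tm x = t \<and> lb x = L)"
    using exQ[of C B] by blast
  have "qm M \<phi> w0 t0 A B C E W tm lb"
    apply unfold_locales
    apply (rule CE(1)) apply (rule CE(2)) apply (rule AB(1)) apply (rule AB(2)) apply (rule AB(3))
    apply (rule CE(3)) apply (rule AB(4)) apply (rule CE(4))
    using Q(1) apply blast
    using Q(2) apply blast
    using Q(3) apply blast
    done
  then show ?thesis by blast
qed

end

theorem theorem11p4:
  fixes \<phi> :: "'a fm" and M :: "('a, 'w, 't) bimodel"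
  assumes "falsifiable_in M \<phi>"
  shows "\<exists>(W::nat set) le lab R.
           ultimately_periodic (subf \<phi>) W le lab R \<and>
           height_le W le (card (subf \<phi>) + 1) \<and>
           (\<exists>w\<in>W. \<phi> \<notin> lab w)"
proof -
  from assms obtain w0 t0 where h: "is_bimodel M" "w0 \<in> wor M" "t0 \<in> tim M" "\<not> sat M w0 t0 \<phi>"
    unfolding falsifiable_in_def by blast
  then interpret qbase M \<phi> w0 t0 by unfold_locales
  obtain A B C E W tm lb where "qm M \<phi> w0 t0 A B C E W tm lb" using exists_qm by blast
  then interpret qm M \<phi> w0 t0 A B C E W tm lb .
  show ?thesis using main by blast
qed


end
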